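(* Let $\alpha>-1$, $0\le\gamma<2+\alpha$ and $1\le p\le q<\infty$. Let $\omega,\sigma$ be weights on $\mathcal H$. The following are equivalent: (a) there is $C_1>0$ such that for every $f\in L^p(\mathcal H,\omega dV_\alpha)$ and every $\lambda>0$, $$|\{z\in\mathcal H:\mathcal M_{\alpha,\gamma}f(z)>\lambda\}|_{\sigma,\alpha}\le\frac{C_1}{\lambda^q}\left(\int_{\mathcal H}|f|^p\omega\,dV_\alpha\right)^{q/p};$$ (b) there is $C_2>0$ such that for every interval $I\subset\mathbb R$, $$|Q_I|_\alpha^{\frac{\gamma}{2+\alpha}+\frac1q-\frac1p}\left(\frac1{|Q_I|_\alpha}\int_{Q_I}\omega^{1-p'}dV_\alpha\right)^{1/p'}\left(\frac1{|Q_I|_\alpha}\int_{Q_I}\sigma\,dV_\alpha\right)^{1/q}\le C_2,$$ where for $p=1$ the factor $\left(\frac1{|Q_I|_\alpha}\int_{Q_I}\omega^{1-p'}dV_\alpha\right)^{1/p'}$ is understood as $(\inf_{Q_I}\omega)^{-1}$.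
   Context: $\mathcal H=\{x+iy:x\in\mathbb R,\ y>0\}$; for $\alpha>-1$, $dV_\alpha(x+iy)=y^\alpha dx\,dy$. A weight is a nonnegative locally integrable function; $L^p(\mathcal H,\omega dV_\alpha)$ is the space of $f$ with $\int|f|^p\omega dV_\alpha<\infty$; $|E|_{\sigma,\alpha}=\int_E\sigma dV_\alpha$, $|E|_\alpha=\int_EdV_\alpha$; $p'$ is the conjugate exponent. For an interval $I$, $Q_I=\{x+iy:x\in I,0<y<|I|\}$. $\mathcal M_{\alpha,\gamma}f(z)=\sup\{|I|^{-(2+\alpha-\gamma)}\int_{Q_I}|f|dV_\alpha: I\subset\mathbb R\text{ interval}, z\in Q_I\}$. *)

theory Defs
  imports "HOL-Analysis.Analysis" "HOL-Probability.Essential_Supremum"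
begin

definition upper_half :: "complex set" where
  "upper_half = {z. 0 < Im z}"

text \<open>Carleson box Q_I over the interval I = [a,b] (a < b), so |I| = b - a.\<close>
definition cbox_Q :: "real \<Rightarrow> real \<Rightarrow> complex set" where
  "cbox_Q a b = {z. a \<le> Re z \<and> Re z \<le> b \<and> 0 < Im z \<and> Im z < b - a}"

definition Valpha :: "real \<Rightarrow> complex measure" where
  "Valpha \<alpha> = density lebesgue (\<lambda>z. ennreal (indicator upper_half z * Im z powr \<alpha>))"

definition weight :: "(complex \<Rightarrow> real) \<Rightarrow> bool" where
  "weight w \<longleftrightarrow> w \<in> borel_measurable lebesgue \<and> (\<forall>z\<in>upper_half. 0 \<le> w z) \<and>
     (\<forall>K. compact K \<and> K \<subseteq> upper_half \<longrightarrow> (\<integral>\<^sup>+ z\<in>K. ennreal (w z) \<partial>lebesgue) < \<infinity>)"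

definition wmeas :: "real \<Rightarrow> (complex \<Rightarrow> real) \<Rightarrow> complex set \<Rightarrow> ennreal" where
  "wmeas \<alpha> \<sigma> E = (\<integral>\<^sup>+ z\<in>E. ennreal (\<sigma> z) \<partial>Valpha \<alpha>)"

definition Mfrac :: "real \<Rightarrow> real \<Rightarrow> (complex \<Rightarrow> real) \<Rightarrow> complex \<Rightarrow> ennreal" where
  "Mfrac \<alpha> \<gamma> f z = (SUP I \<in> {(a, b). a < b \<and> z \<in> cbox_Q a b}.
      ennreal ((snd I - fst I) powr (- (2 + \<alpha> - \<gamma>))) *
      (\<integral>\<^sup>+ w\<in>cbox_Q (fst I) (snd I). ennreal \<bar>f w\<bar> \<partial>Valpha \<alpha>))"

definition epowr :: "ennreal \<Rightarrow> real \<Rightarrow> ennreal" where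
  "epowr x r = (if x = \<infinity> then \<infinity> else ennreal (enn2real x powr r))"

definition conj_exp :: "real \<Rightarrow> real" where
  "conj_exp p = p / (p - 1)"

text \<open>Pointwise w^(1-p') with values in [0,infinity]; w z = 0 gives infinity since 1 - p' < 0.\<close>
definition wpow :: "(complex \<Rightarrow> real) \<Rightarrow> real \<Rightarrow> complex \<Rightarrow> ennreal" where
  "wpow w p z = (if w z = 0 then \<infinity> else ennreal (w z powr (1 - conj_exp p)))"

text \<open>Essential infimum of w over the box Q_I (w.r.t. Lebesgue measure on Q_I, which has the
  same null sets as dV_alpha there).\<close>
definition essinf_box :: "(complex \<Rightarrow> real) \<Rightarrow> real \<Rightarrow> real \<Rightarrow> ereal" where
  "essinf_box w a b = - esssup (density lebesgue (indicator (cbox_Q a b))) (\<lambda>z. - ereal (w z))"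

definition inv_essinf_box :: "(complex \<Rightarrow> real) \<Rightarrow> real \<Rightarrow> real \<Rightarrow> ennreal" where
  "inv_essinf_box w a b = (if essinf_box w a b \<le> 0 then \<infinity>
      else ennreal (1 / real_of_ereal (essinf_box w a b)))"

definition omega_factor :: "real \<Rightarrow> real \<Rightarrow> (complex \<Rightarrow> real) \<Rightarrow> real \<Rightarrow> real \<Rightarrow> ennreal" where
  "omega_factor \<alpha> p w a b = (if p = 1 then inv_essinf_box w a b
     else epowr (ennreal (1 / measure (Valpha \<alpha>) (cbox_Q a b)) *
                 (\<integral>\<^sup>+ z\<in>cbox_Q a b. wpow w p z \<partial>Valpha \<alpha>)) (1 / conj_exp p))"

end

theory Submission
  imports Defs
begin

lemma Q_borel[measurable]: "cbox_Q a b \<in> sets borel" unfolding cbox_Q_def by measurable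
lemma H_borel[measurable]: "upper_half \<in> sets borel" unfolding upper_half_def by measurable

lemma borel_lebesgue: "f \<in> borel_measurable borel \<Longrightarrow> f \<in> borel_measurable lebesgue"
  by (rule measurable_completion) simp

lemma sets_lebesgueI: "A \<in> sets borel \<Longrightarrow> A \<in> sets lebesgue"
  by (rule sets_completionI_sets) simp

lemma Q_leb[measurable]: "cbox_Q a b \<in> sets lebesgue" by (rule sets_lebesgueI) simp
lemma H_leb[measurable]: "upper_half \<in> sets lebesgue" by (rule sets_lebesgueI) simp

lemma dens_meas[measurable]: "(\<lambda>z. indicator upper_half z * Im z powr \<alpha> :: real) \<in> borel_measurable lebesgue"
  by (rule borel_lebesgue) measurable

lemma sets_V[measurable_cong]: "sets (Valpha \<alpha>) = sets lebesgue"
  by (simp add: Valpha_def)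
lemma space_V[simp]: "space (Valpha \<alpha>) = UNIV"
  by (simp add: Valpha_def)

lemma int_powr_0:
  assumes "\<alpha> > -1" "0 \<le> h"
  shows "(\<integral>\<^sup>+ y. ennreal (indicator {0<..<h} y * y powr \<alpha>) \<partial>lborel) = ennreal (h powr (\<alpha>+1) / (\<alpha>+1))"
proof -
  have "(\<integral>\<^sup>+ y. ennreal (indicator {0<..<h} y * y powr \<alpha>) \<partial>lborel)
      = (\<integral>\<^sup>+ y. ennreal (indicator {0..h} y * y powr \<alpha>) \<partial>lborel)"
    apply (rule nn_integral_cong_AE)
    using AE_lborel_singleton[of h] by eventually_elim (auto simp: indicator_def)
  also have "\<dots> = ennreal (h powr (\<alpha>+1) / (\<alpha>+1))"
    by (rule nn_integral_has_integral_lebesgue) (use assms has_integral_powr_from_0 in auto)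
  finally show ?thesis .
qed

lemma vol_box:
  assumes "\<alpha> > -1" "a < b"
  shows "emeasure (Valpha \<alpha>) (cbox_Q a b) = ennreal ((b-a) powr (2+\<alpha>) / (1+\<alpha>))"
proof -
  define F where "F = (\<lambda>c::complex. if c = 1 then (\<lambda>x::real. indicator {a..b} x :: real)
      else (\<lambda>x. indicator {0<..<b-a} x * x powr \<alpha>))"
  have "emeasure (Valpha \<alpha>) (cbox_Q a b) = (\<integral>\<^sup>+ z. ennreal (indicator upper_half z * Im z powr \<alpha>) * indicator (cbox_Q a b) z \<partial>lebesgue)"
    unfolding Valpha_def by (subst emeasure_density) auto
  also have "\<dots> = (\<integral>\<^sup>+ z. (\<Prod>c\<in>Basis. ennreal (F c (z \<bullet> c))) \<partial>lborel)"
    unfolding nn_integral_completion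
    apply (rule nn_integral_cong)
    by (auto simp: F_def Basis_complex_def cbox_Q_def upper_half_def indicator_def)
  also have "\<dots> = (\<Prod>c\<in>Basis. (\<integral>\<^sup>+x. F c x \<partial>lborel))"
    by (rule nn_integral_lborel_prod) (auto simp: F_def)
  also have "\<dots> = ennreal (b - a) * ennreal ((b-a) powr (\<alpha>+1) / (\<alpha>+1))"
    using int_powr_0[of \<alpha> "b-a"] assms by (simp add: Basis_complex_def F_def ennreal_indicator)
  also have "\<dots> = ennreal ((b-a) powr (2+\<alpha>) / (1+\<alpha>))"
    using assms by (simp add: ennreal_mult' [symmetric] powr_add add.commute power2_eq_square)
  finally show ?thesis .
qed

lemma measure_box:
  assumes "\<alpha> > -1" "a < b"
  shows "measure (Valpha \<alpha>) (cbox_Q a b) = (b-a) powr (2+\<alpha>) / (1+\<alpha>)"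
  using vol_box[OF assms] assms unfolding measure_def by simp

lemma V_AE: "AE x in lebesgue. P x \<Longrightarrow> AE x in Valpha \<alpha>. P x"
  unfolding Valpha_def by (subst AE_density) (auto elim: AE_mp)

lemma box_intersect:
  assumes "a < b" "c < d" "d - c \<le> b - a" "cbox_Q a b \<inter> cbox_Q c d \<noteq> {}"
  shows "cbox_Q c d \<subseteq> cbox_Q (2 * a-b) (2 * b-a)"
proof -
  obtain z where z: "z \<in> cbox_Q a b" "z \<in> cbox_Q c d" using assms(4) by blast
  show ?thesis using z assms(1-3) unfolding cbox_Q_def by auto
qed

lemma box_nonempty: "a < b \<Longrightarrow> Complex a ((b-a)/2) \<in> cbox_Q a b"
  by (auto simp: cbox_Q_def)

lemma vitali_boxes:
  fixes T :: "(real \<times> real) set"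
  assumes "finite T" "\<forall>t\<in>T. fst t < snd t"
  shows "\<exists>T'\<subseteq>T. (\<forall>s\<in>T'. \<forall>t\<in>T'. s \<noteq> t \<longrightarrow> cbox_Q (fst s) (snd s) \<inter> cbox_Q (fst t) (snd t) = {})
     \<and> (\<Union>t\<in>T. cbox_Q (fst t) (snd t)) \<subseteq> (\<Union>t\<in>T'. cbox_Q (2 * fst t - snd t) (2 * snd t - fst t))"
  using assms
proof (induction "card T" arbitrary: T rule: less_induct)
  case less
  show ?case
  proof (cases "T = {}")
    case True then show ?thesis by auto
  next
    case False
    define L where "L = Max ((\<lambda>t. snd t - fst t) ` T)"
    have "L \<in> (\<lambda>t. snd t - fst t) ` T" unfolding L_def using less.prems False by (intro Max_in) auto
    then obtain m where m: "m \<in> T" "L = snd m - fst m" by auto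
    have mx: "snd t - fst t \<le> snd m - fst m" if t: "t \<in> T" for t
    proof -
      have "snd t - fst t \<le> L" unfolding L_def using less.prems(1) t by (intro Max_ge) auto
      then show ?thesis using m by simp
    qed
    define T1 where "T1 = {t\<in>T. cbox_Q (fst t) (snd t) \<inter> cbox_Q (fst m) (snd m) = {}}"
    have "m \<notin> T1" using box_nonempty[of "fst m" "snd m"] less.prems m unfolding T1_def by auto
    then have "T1 \<subset> T" using m unfolding T1_def by auto
    then have "card T1 < card T" using less.prems by (simp add: psubset_card_mono)
    moreover have "finite T1" "\<forall>t\<in>T1. fst t < snd t" using less.prems unfolding T1_def by auto
    ultimately obtain T1' where T1': "T1' \<subseteq> T1"
      "\<forall>s\<in>T1'. \<forall>t\<in>T1'. s \<noteq> t \<longrightarrow> cbox_Q (fst s) (snd s) \<inter> cbox_Q (fst t) (snd t) = {}"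
      "(\<Union>t\<in>T1. cbox_Q (fst t) (snd t)) \<subseteq> (\<Union>t\<in>T1'. cbox_Q (2 * fst t - snd t) (2 * snd t - fst t))"
      using less.hyps[of T1] by auto
    have "insert m T1' \<subseteq> T" using T1' m unfolding T1_def by auto
    moreover have "\<forall>s\<in>insert m T1'. \<forall>t\<in>insert m T1'. s \<noteq> t \<longrightarrow> cbox_Q (fst s) (snd s) \<inter> cbox_Q (fst t) (snd t) = {}"
      using T1' unfolding T1_def by (auto simp: Int_commute)
    moreover have "(\<Union>t\<in>T. cbox_Q (fst t) (snd t)) \<subseteq> (\<Union>t\<in>insert m T1'. cbox_Q (2 * fst t - snd t) (2 * snd t - fst t))"
    proof
      fix z assume "z \<in> (\<Union>t\<in>T. cbox_Q (fst t) (snd t))"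
      then obtain t where t: "t \<in> T" "z \<in> cbox_Q (fst t) (snd t)" by auto
      show "z \<in> (\<Union>t\<in>insert m T1'. cbox_Q (2 * fst t - snd t) (2 * snd t - fst t))"
      proof (cases "t \<in> T1")
        case True then show ?thesis using T1' t by blast
      next
        case False
        then have "cbox_Q (fst t) (snd t) \<inter> cbox_Q (fst m) (snd m) \<noteq> {}" using t unfolding T1_def by auto
        then have "cbox_Q (fst t) (snd t) \<subseteq> cbox_Q (2 * fst m - snd m) (2 * snd m - fst m)"
          using box_intersect[of "fst m" "snd m" "fst t" "snd t"] less.prems m t mx[OF t(1)] by (auto simp: Int_commute)
        then show ?thesis using t by auto
      qed
    qed
    ultimately show ?thesis by blast
  qed
qed

lemma powr_superadd:
  fixes x y r :: real
  assumes "0 \<le> x" "0 \<le> y" "1 \<le> r"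
  shows "x powr r + y powr r \<le> (x + y) powr r"
proof (cases "x + y = 0")
  case True then have "x = 0" "y = 0" using assms by auto
  then show ?thesis using assms by simp
next
  case False
  then have s: "x + y > 0" using assms by auto
  have "x powr r = (x+y) powr r * (x/(x+y)) powr r" using s assms by (simp add: powr_divide)
  also have "(x/(x+y)) powr r \<le> (x/(x+y)) powr 1"
    using assms s by (intro powr_mono') auto
  finally have 1: "x powr r \<le> (x+y) powr r * (x/(x+y))" using assms s
    by (smt (verit, best) divide_nonneg_nonneg mult_left_mono powr_ge_zero powr_one)
  have "y powr r = (x+y) powr r * (y/(x+y)) powr r" using s assms by (simp add: powr_divide)
  also have "(y/(x+y)) powr r \<le> (y/(x+y)) powr 1"
    using assms s by (intro powr_mono') auto
  finally have 2: "y powr r \<le> (x+y) powr r * (y/(x+y))" using assms s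
    by (smt (verit, best) divide_nonneg_nonneg mult_left_mono powr_ge_zero powr_one)
  have "x/(x+y) + y/(x+y) = 1" using s by (simp add: add_divide_distrib[symmetric])
  then have "(x+y) powr r * (x/(x+y)) + (x+y) powr r * (y/(x+y)) = (x+y) powr r"
    by (metis distrib_left mult.right_neutral)
  then show ?thesis using 1 2 by linarith
qed

lemma sum_powr_superadd:
  fixes x :: "'a \<Rightarrow> real"
  assumes "finite T" "\<And>t. t \<in> T \<Longrightarrow> 0 \<le> x t" "1 \<le> r"
  shows "(\<Sum>t\<in>T. x t powr r) \<le> (\<Sum>t\<in>T. x t) powr r"
  using assms
proof (induction T rule: finite_induct)
  case empty then show ?case by simp
next
  case (insert a T)
  have "(\<Sum>t\<in>insert a T. x t powr r) = x a powr r + (\<Sum>t\<in>T. x t powr r)" using insert by simp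
  also have "\<dots> \<le> x a powr r + (\<Sum>t\<in>T. x t) powr r" using insert by auto
  also have "\<dots> \<le> (x a + (\<Sum>t\<in>T. x t)) powr r"
    using insert by (intro powr_superadd) (auto intro: sum_nonneg)
  finally show ?case using insert by simp
qed

lemma holder_nn:
  fixes g h :: "'a \<Rightarrow> real"
  assumes gm[measurable]: "g \<in> borel_measurable M" and hm[measurable]: "h \<in> borel_measurable M"
    and gn: "\<And>x. 0 \<le> g x" and hn: "\<And>x. 0 \<le> h x" and p: "p > 1"
    and A: "(\<integral>\<^sup>+x. ennreal (g x powr p) \<partial>M) = ennreal A" "0 \<le> A"
    and B: "(\<integral>\<^sup>+x. ennreal (h x powr (p/(p-1))) \<partial>M) = ennreal B" "0 \<le> B"
  shows "(\<integral>\<^sup>+x. ennreal (g x * h x) \<partial>M) \<le> ennreal (A powr (1/p) * B powr ((p-1)/p))"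
proof -
  define q where "q = p/(p-1)"
  have q1: "q > 1" using p unfolding q_def by (simp add: field_simps)
  have pq: "1/p + 1/q = 1" using p unfolding q_def by (simp add: field_simps)
  have qinv: "1/q = (p-1)/p" unfolding q_def by simp
  show ?thesis
  proof (cases "A = 0 \<or> B = 0")
    case True
    then show ?thesis
    proof
      assume A0: "A = 0"
      have "AE x in M. ennreal (g x powr p) = 0"
        using A A0 by (subst nn_integral_0_iff_AE[symmetric]) auto
      then have "AE x in M. g x = 0" by eventually_elim (use gn in auto)
      then have "(\<integral>\<^sup>+x. ennreal (g x * h x) \<partial>M) = (\<integral>\<^sup>+x. 0 \<partial>M)"
        by (intro nn_integral_cong_AE) auto
      then show ?thesis by simp
    next
      assume B0: "B = 0"
      have "AE x in M. ennreal (h x powr (p/(p-1))) = 0"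
        using B B0 by (subst nn_integral_0_iff_AE[symmetric]) auto
      then have "AE x in M. h x = 0" by eventually_elim (use hn in auto)
      then have "(\<integral>\<^sup>+x. ennreal (g x * h x) \<partial>M) = (\<integral>\<^sup>+x. 0 \<partial>M)"
        by (intro nn_integral_cong_AE) auto
      then show ?thesis by simp
    qed
  next
    case False
    then have Ap: "A > 0" and Bp: "B > 0" using A B by auto
    define c where "c = A powr (1/p) * B powr (1/q)"
    have cp: "c > 0" using Ap Bp unfolding c_def by simp
    have pw: "g x * h x \<le> (c/(p*A)) * g x powr p + (c/(q*B)) * h x powr q" for x
    proof -
      define u where "u = g x / A powr (1/p)"
      define v where "v = h x / B powr (1/q)"
      have "u * v \<le> u powr p / p + v powr q / q"
        using Youngs_inequality[of p q u v] p q1 pq gn hn Ap Bp unfolding u_def v_def by auto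
      moreover have "u powr p = g x powr p / A"
        using Ap p gn unfolding u_def by (simp add: powr_divide powr_powr)
      moreover have "v powr q = h x powr q / B"
        using Bp q1 hn unfolding v_def by (simp add: powr_divide powr_powr)
      moreover have "g x * h x = c * (u * v)"
        using Ap Bp unfolding u_def v_def c_def by simp
      ultimately have "g x * h x \<le> c * (g x powr p / A / p + h x powr q / B / q)"
        using cp by (metis mult_left_mono less_imp_le)
      then show ?thesis by (simp add: field_simps)
    qed
    have "(\<integral>\<^sup>+x. ennreal (g x * h x) \<partial>M) \<le>
        (\<integral>\<^sup>+x. ennreal (c/(p*A)) * ennreal (g x powr p) + ennreal (c/(q*B)) * ennreal (h x powr q) \<partial>M)"
      apply (rule nn_integral_mono)
      using pw cp Ap Bp p q1
      by (simp add: ennreal_mult'[symmetric] ennreal_plus[symmetric] del: ennreal_plus)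
    also have "\<dots> = ennreal (c/(p*A)) * ennreal A + ennreal (c/(q*B)) * ennreal B"
      using A B unfolding q_def by (simp add: nn_integral_add nn_integral_cmult)
    also have "\<dots> = ennreal (c/(p*A) * A + c/(q*B) * B)"
      using cp Ap Bp p q1 by (simp add: ennreal_mult'[symmetric] ennreal_plus[symmetric] del: ennreal_plus)
    also have "c/(p*A) * A + c/(q*B) * B = c * (1/p + 1/q)" using Ap Bp by (simp add: field_simps)
    also have "\<dots> = A powr (1/p) * B powr ((p-1)/p)" using pq qinv unfolding c_def by simp
    finally show ?thesis .
  qed
qed

lemma epowr_fin: "x \<noteq> \<infinity> \<Longrightarrow> epowr x r = ennreal (enn2real x powr r)"
  by (simp add: epowr_def)
lemma epowr_ennreal: "0 \<le> x \<Longrightarrow> epowr (ennreal x) r = ennreal (x powr r)"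
  by (simp add: epowr_def)
lemma epowr_0[simp]: "epowr 0 r = 0"
  by (simp add: epowr_def)
lemma epowr_top[simp]: "epowr \<infinity> r = \<infinity>"
  by (simp add: epowr_def)

lemma wmeas_mono: "A \<subseteq> B \<Longrightarrow> wmeas \<alpha> \<sigma> A \<le> wmeas \<alpha> \<sigma> B"
  unfolding wmeas_def by (intro nn_integral_mono) (auto simp: indicator_def)

lemma Mfrac_ge:
  assumes "a < b" "z \<in> cbox_Q a b"
  shows "ennreal ((b-a) powr (-(2+\<alpha>-\<gamma>))) * (\<integral>\<^sup>+ w\<in>cbox_Q a b. ennreal \<bar>f w\<bar> \<partial>Valpha \<alpha>) \<le> Mfrac \<alpha> \<gamma> f z"
  unfolding Mfrac_def by (rule SUP_upper2[of "(a,b)"]) (use assms in auto)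

lemma dens_pos: "z \<in> upper_half \<Longrightarrow> 0 < Im z powr \<alpha>"
  by (simp add: upper_half_def)

lemma V_null:
  assumes E[measurable]: "E \<in> sets lebesgue" and "E \<subseteq> upper_half" and "emeasure (Valpha \<alpha>) E = 0"
  shows "AE x in lebesgue. x \<notin> E"
proof -
  have "(\<integral>\<^sup>+ z. ennreal (indicator upper_half z * Im z powr \<alpha>) * indicator E z \<partial>lebesgue) = 0"
    using assms(3) unfolding Valpha_def by (subst (asm) emeasure_density) auto
  then have "AE z in lebesgue. ennreal (indicator upper_half z * Im z powr \<alpha>) * indicator E z = 0"
    by (subst (asm) nn_integral_0_iff_AE) auto
  then show ?thesis
    by eventually_elim (use assms(2) dens_pos in \<open>auto simp: indicator_def split: if_splits\<close>)
qed

lemma V_pos: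
  assumes E[measurable]: "E \<in> sets lebesgue" and "E \<subseteq> upper_half" and "\<not> (AE x in lebesgue. x \<notin> E)"
  shows "emeasure (Valpha \<alpha>) E > 0"
  using V_null[OF assms(1,2)] assms(3) by (auto simp: zero_less_iff_neq_zero)

lemma Q_sub_H: "cbox_Q a b \<subseteq> upper_half"
  by (auto simp: cbox_Q_def upper_half_def)

lemma test_lemma:
  fixes g :: "complex \<Rightarrow> real"
  assumes A: "\<forall>f :: complex \<Rightarrow> real.
            f \<in> borel_measurable lebesgue \<longrightarrow>
            (\<integral>\<^sup>+ z. ennreal (\<bar>f z\<bar> powr p * \<omega> z) \<partial>Valpha \<alpha>) < \<infinity> \<longrightarrow>
            (\<forall>lam>0. wmeas \<alpha> \<sigma> {z \<in> upper_half. Mfrac \<alpha> \<gamma> f z > ennreal lam}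
                 \<le> ennreal (C1 / lam powr q) *
                   epowr (\<integral>\<^sup>+ z. ennreal (\<bar>f z\<bar> powr p * \<omega> z) \<partial>Valpha \<alpha>) (q / p))"
    and ab: "a < b" and gm: "g \<in> borel_measurable lebesgue"
    and G: "(\<integral>\<^sup>+ z. ennreal (\<bar>g z\<bar> powr p * \<omega> z) \<partial>Valpha \<alpha>) = ennreal G" "0 \<le> G"
    and J: "(\<integral>\<^sup>+ w\<in>cbox_Q a b. ennreal \<bar>g w\<bar> \<partial>Valpha \<alpha>) = ennreal j" "0 < j"
  shows "wmeas \<alpha> \<sigma> (cbox_Q a b) \<le> ennreal (C1 * 2 powr q * (b-a) powr ((2+\<alpha>-\<gamma>)*q) / j powr q * G powr (q/p))"
proof -
  define s where "s = 2+\<alpha>-\<gamma>"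
  define lam where "lam = j / (2 * (b-a) powr s)"
  have lp: "lam > 0" unfolding lam_def using ab J by simp
  have sub: "cbox_Q a b \<subseteq> {z \<in> upper_half. Mfrac \<alpha> \<gamma> g z > ennreal lam}"
  proof
    fix z assume z: "z \<in> cbox_Q a b"
    have "ennreal lam < ennreal ((b-a) powr (-s) * j)"
      using lp ab J(2) unfolding lam_def by (subst ennreal_less_iff) (auto simp: powr_minus field_simps)
    also have "\<dots> = ennreal ((b-a) powr (-(2+\<alpha>-\<gamma>))) * (\<integral>\<^sup>+ w\<in>cbox_Q a b. ennreal \<bar>g w\<bar> \<partial>Valpha \<alpha>)"
      using J unfolding s_def by (simp add: ennreal_mult)
    also have "\<dots> \<le> Mfrac \<alpha> \<gamma> g z" by (rule Mfrac_ge[OF ab z])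
    finally show "z \<in> {z \<in> upper_half. Mfrac \<alpha> \<gamma> g z > ennreal lam}"
      using z Q_sub_H by auto
  qed
  have "wmeas \<alpha> \<sigma> (cbox_Q a b) \<le> wmeas \<alpha> \<sigma> {z \<in> upper_half. Mfrac \<alpha> \<gamma> g z > ennreal lam}"
    by (rule wmeas_mono[OF sub])
  also have "\<dots> \<le> ennreal (C1 / lam powr q) * epowr (ennreal G) (q / p)"
    using A gm G lp by auto
  also have "\<dots> = ennreal (C1 / lam powr q) * ennreal (G powr (q/p))"
    using G by (simp add: epowr_ennreal)
  also have "C1 / lam powr q = C1 * 2 powr q * (b-a) powr (s*q) / j powr q"
  proof -
    have "lam powr q = j powr q / (2 powr q * (b-a) powr (s*q))"
      unfolding lam_def using ab J by (simp add: powr_mult powr_divide powr_powr)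
    then show ?thesis using ab J by simp

  qed
  also have "ennreal (C1 * 2 powr q * (b-a) powr (s*q) / j powr q) * ennreal (G powr (q/p)) =
      ennreal (C1 * 2 powr q * (b-a) powr ((2+\<alpha>-\<gamma>)*q) / j powr q * G powr (q/p))"
    unfolding s_def by (rule ennreal_mult''[symmetric]) simp
  finally show ?thesis .
qed

lemma weight_meas[measurable_dest]: "weight w \<Longrightarrow> w \<in> borel_measurable lebesgue"
  by (simp add: weight_def)

lemma weight_nonneg: "weight w \<Longrightarrow> z \<in> upper_half \<Longrightarrow> 0 \<le> w z"
  by (simp add: weight_def)

lemma essinf_AE:
  assumes wm: "w \<in> borel_measurable lebesgue"
  shows "AE z in lebesgue. z \<in> cbox_Q a b \<longrightarrow> essinf_box w a b \<le> ereal (w z)"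
proof -
  let ?D = "density lebesgue (indicator (cbox_Q a b))"
  have "AE z in ?D. - ereal (w z) \<le> esssup ?D (\<lambda>z. - ereal (w z))" by (rule esssup_AE)
  then have "AE z in lebesgue. indicator (cbox_Q a b) z \<noteq> (0::ennreal) \<longrightarrow> - ereal (w z) \<le> esssup ?D (\<lambda>z. - ereal (w z))"
    by (subst (asm) AE_density) auto
  then show ?thesis
    unfolding essinf_box_def by eventually_elim (auto simp: ereal_uminus_le_reorder)
qed

lemma essinf_ge:
  assumes wm: "w \<in> borel_measurable lebesgue"
    and "AE z in lebesgue. z \<in> cbox_Q a b \<longrightarrow> t \<le> w z"
  shows "ereal t \<le> essinf_box w a b"
proof -
  let ?D = "density lebesgue (indicator (cbox_Q a b))"
  have m: "(\<lambda>z. - ereal (w z)) \<in> borel_measurable ?D"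
    using wm by (simp add: measurable_cong_sets[OF sets_density refl])
  have "AE z in ?D. - ereal (w z) \<le> - ereal t"
    using assms(2) by (subst AE_density) (auto elim!: AE_mp)
  then have "esssup ?D (\<lambda>z. - ereal (w z)) \<le> - ereal t" by (rule esssup_I[OF m])
  then show ?thesis unfolding essinf_box_def by (metis ereal_minus_le_minus ereal_uminus_uminus)
qed

lemma essinf_nonneg:
  assumes "weight w" shows "0 \<le> essinf_box w a b"
proof -
  have "AE z in lebesgue. z \<in> cbox_Q a b \<longrightarrow> 0 \<le> w z"
    by (rule AE_I2) (use assms Q_sub_H weight_nonneg in blast)
  then show ?thesis using essinf_ge[of w a b 0] assms weight_meas by (auto simp: zero_ereal_def)
qed

lemma essinf_fin:
  fixes \<alpha> :: real
  assumes "weight w" "\<alpha> > -1" "a < b"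
  shows "essinf_box w a b < \<infinity>"
proof (rule ccontr)
  assume "\<not> essinf_box w a b < \<infinity>"
  then have inf: "essinf_box w a b = \<infinity>" by simp
  have "AE z in lebesgue. z \<notin> cbox_Q a b"
    using essinf_AE[of w a b] assms(1) inf by (auto simp: weight_def)
  then have "AE z in Valpha \<alpha>. z \<notin> cbox_Q a b" by (rule V_AE)
  then have "emeasure (Valpha \<alpha>) (cbox_Q a b) = 0"
    by (subst (asm) AE_iff_measurable[of "cbox_Q a b"]) auto
  then show False using vol_box[OF assms(2,3)] assms by simp
qed

lemma ab_p1:
  fixes \<alpha> \<gamma> p q C1 a b :: real and \<omega> \<sigma> :: "complex \<Rightarrow> real"
  assumes al: "\<alpha> > -1" and q: "q \<ge> 1" and wo: "weight \<omega>" and C1: "C1 > 0" and ab: "a < b"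
    and p1: "p = 1"
    and A: "\<forall>f :: complex \<Rightarrow> real.
            f \<in> borel_measurable lebesgue \<longrightarrow>
            (\<integral>\<^sup>+ z. ennreal (\<bar>f z\<bar> powr p * \<omega> z) \<partial>Valpha \<alpha>) < \<infinity> \<longrightarrow>
            (\<forall>lam>0. wmeas \<alpha> \<sigma> {z \<in> upper_half. Mfrac \<alpha> \<gamma> f z > ennreal lam}
                 \<le> ennreal (C1 / lam powr q) *
                   epowr (\<integral>\<^sup>+ z. ennreal (\<bar>f z\<bar> powr p * \<omega> z) \<partial>Valpha \<alpha>) (q / p))"
  shows "ennreal (measure (Valpha \<alpha>) (cbox_Q a b) powr (\<gamma> / (2 + \<alpha>) + 1 / q - 1 / p)) *
            omega_factor \<alpha> p \<omega> a b *
            epowr (ennreal (1 / measure (Valpha \<alpha>) (cbox_Q a b)) * wmeas \<alpha> \<sigma> (cbox_Q a b)) (1 / q)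
         \<le> ennreal (measure (Valpha \<alpha>) (cbox_Q a b) powr (\<gamma>/(2+\<alpha>) - 1) * (C1 powr (1/q) * 2 * (b-a) powr (2+\<alpha>-\<gamma>)))"
proof -
  note wm[measurable] = weight_meas[OF wo]
  define vol where "vol = measure (Valpha \<alpha>) (cbox_Q a b)"
  define l where "l = b - a"
  define s where "s = 2+\<alpha>-\<gamma>"
  define c where "c = C1 * 2 powr q * l powr (s*q)"
  define S where "S = wmeas \<alpha> \<sigma> (cbox_Q a b)"
  have lp: "l > 0" using ab unfolding l_def by simp
  have cp: "c > 0" unfolding c_def using C1 lp by simp
  have volp: "vol > 0" unfolding vol_def using measure_box[OF al ab] ab al by simp
  have volE: "emeasure (Valpha \<alpha>) (cbox_Q a b) = ennreal vol"
    unfolding vol_def using vol_box[OF al ab] measure_box[OF al ab] by simp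
  define m where "m = essinf_box \<omega> a b"
  have m0: "0 \<le> m" unfolding m_def by (rule essinf_nonneg[OF wo])
  have mf: "m < \<infinity>" unfolding m_def by (rule essinf_fin[OF wo al ab])
  obtain mr where mr: "m = ereal mr" "0 \<le> mr" using m0 mf by (cases m) auto
  have K: "S \<le> ennreal (c * t powr q)" if tm: "mr < t" for t
  proof -
    define E where "E = cbox_Q a b \<inter> {z. \<omega> z < t}"
    have Em[measurable]: "E \<in> sets lebesgue" unfolding E_def by measurable
    have EQ: "E \<subseteq> cbox_Q a b" unfolding E_def by auto
    have EH: "E \<subseteq> upper_half" using EQ Q_sub_H by auto
    have nAE: "\<not> (AE z in lebesgue. z \<notin> E)"
    proof
      assume "AE z in lebesgue. z \<notin> E"
      then have "AE z in lebesgue. z \<in> cbox_Q a b \<longrightarrow> t \<le> \<omega> z"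
        by eventually_elim (auto simp: E_def)
      then have "ereal t \<le> m" unfolding m_def using essinf_ge[OF wm] by blast
      then show False using tm mr by simp
    qed
    have VE: "emeasure (Valpha \<alpha>) E > 0" by (rule V_pos[OF Em EH nAE])
    have "emeasure (Valpha \<alpha>) E \<le> emeasure (Valpha \<alpha>) (cbox_Q a b)"
      by (rule emeasure_mono[OF EQ]) simp
    then have VEf: "emeasure (Valpha \<alpha>) E < \<infinity>" using volE by (simp add: le_less_trans)
    define e where "e = enn2real (emeasure (Valpha \<alpha>) E)"
    have eE: "emeasure (Valpha \<alpha>) E = ennreal e" unfolding e_def using VEf by simp
    have ep: "e > 0" using VE eE by simp
    have tp: "t > 0" using tm mr by simp
    define g where "g = (\<lambda>z. indicator E z :: real)"
    have gm: "g \<in> borel_measurable lebesgue" unfolding g_def by measurable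
    have "(\<integral>\<^sup>+ z. ennreal (\<bar>g z\<bar> powr p * \<omega> z) \<partial>Valpha \<alpha>) = (\<integral>\<^sup>+ z. ennreal (\<omega> z) * indicator E z \<partial>Valpha \<alpha>)"
      by (intro nn_integral_cong) (auto simp: g_def p1 indicator_def)
    also have "\<dots> \<le> (\<integral>\<^sup>+ z. ennreal t * indicator E z \<partial>Valpha \<alpha>)"
      by (intro nn_integral_mono) (auto simp: E_def indicator_def intro!: ennreal_leI)
    also have "\<dots> = ennreal (t * e)"
      using eE tp by (simp add: nn_integral_cmult_indicator ennreal_mult')
    finally have Gle: "(\<integral>\<^sup>+ z. ennreal (\<bar>g z\<bar> powr p * \<omega> z) \<partial>Valpha \<alpha>) \<le> ennreal (t * e)" .
    define G where "G = enn2real (\<integral>\<^sup>+ z. ennreal (\<bar>g z\<bar> powr p * \<omega> z) \<partial>Valpha \<alpha>)"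
    have GE: "(\<integral>\<^sup>+ z. ennreal (\<bar>g z\<bar> powr p * \<omega> z) \<partial>Valpha \<alpha>) = ennreal G"
      unfolding G_def using Gle by (simp add: top_unique ennreal_enn2real_if) (metis ennreal_enn2real ennreal_neq_top neq_top_trans)
    have G0: "0 \<le> G" unfolding G_def by simp
    have Gte: "G \<le> t * e" using Gle GE tp ep by (simp add: ennreal_le_iff)
    have "(\<integral>\<^sup>+ w\<in>cbox_Q a b. ennreal \<bar>g w\<bar> \<partial>Valpha \<alpha>) = (\<integral>\<^sup>+ w. indicator E w \<partial>Valpha \<alpha>)"
      by (intro nn_integral_cong) (use EQ in \<open>auto simp: g_def indicator_def\<close>)
    also have "\<dots> = ennreal e" using eE by simp
    finally have JE: "(\<integral>\<^sup>+ w\<in>cbox_Q a b. ennreal \<bar>g w\<bar> \<partial>Valpha \<alpha>) = ennreal e" .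
    have "S \<le> ennreal (C1 * 2 powr q * (b-a) powr ((2+\<alpha>-\<gamma>)*q) / e powr q * G powr (q/p))"
      unfolding S_def by (rule test_lemma[OF A ab gm GE G0 JE ep])
    also have "C1 * 2 powr q * (b-a) powr ((2+\<alpha>-\<gamma>)*q) / e powr q * G powr (q/p) \<le> c * t powr q"
    proof -
      have "G powr q \<le> (t*e) powr q" using G0 Gte q by (intro powr_mono2) auto
      also have "\<dots> = t powr q * e powr q" using tp ep by (simp add: powr_mult)
      finally have "G powr q \<le> t powr q * e powr q" .
      then have "c / e powr q * G powr q \<le> c / e powr q * (t powr q * e powr q)"
        using cp ep by (intro mult_left_mono) auto
      also have "\<dots> = c * t powr q" using ep by simp
      finally show ?thesis unfolding c_def l_def s_def p1 by simp
    qed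
    then have "ennreal (C1 * 2 powr q * (b-a) powr ((2+\<alpha>-\<gamma>)*q) / e powr q * G powr (q/p)) \<le> ennreal (c * t powr q)"
      by (rule ennreal_leI)
    finally show ?thesis .
  qed
  have Sfin: "S < \<infinity>" using K[of "mr+1"] by (simp add: le_less_trans)
  define sr where "sr = enn2real S"
  have SE: "S = ennreal sr" unfolding sr_def using Sfin by simp
  have sr0: "0 \<le> sr" unfolding sr_def by simp
  define u where "u = (sr/c) powr (1/q)"
  have ut: "u \<le> t" if "mr < t" for t
  proof -
    have tp: "t > 0" using that mr by simp
    have "sr \<le> c * t powr q" using K[OF that] SE cp tp by (simp add: ennreal_le_iff)
    then have "sr / c \<le> t powr q" using cp by (simp add: field_simps)
    then have "u \<le> (t powr q) powr (1/q)" unfolding u_def using sr0 cp q by (intro powr_mono2) auto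
    also have "\<dots> = t" using tp q by (simp add: powr_powr)
    finally show ?thesis .
  qed
  have umr: "u \<le> mr"
  proof (rule ccontr)
    assume "\<not> u \<le> mr"
    then have "mr < (u+mr)/2" "(u+mr)/2 < u" by auto
    then show False using ut by fastforce
  qed
  have u0: "0 \<le> u" unfolding u_def by simp
  have sr_eq: "sr = c * u powr q" unfolding u_def using sr0 cp q by (simp add: powr_powr)
  have srle: "sr \<le> c * mr powr q" unfolding sr_eq using u0 umr q cp by (intro mult_left_mono powr_mono2) auto
  show ?thesis
  proof (cases "mr = 0")
    case True
    then have "sr = 0" using srle sr0 q by simp
    then have "S = 0" using SE by simp
    then show ?thesis unfolding S_def by simp
  next
    case False
    then have mrp: "mr > 0" using mr by simp
    have of: "omega_factor \<alpha> p \<omega> a b = ennreal (1/mr)"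
      unfolding omega_factor_def inv_essinf_box_def using p1 mrp mr by (simp add: m_def[symmetric])
    have ep: "epowr (ennreal (1 / vol) * S) (1 / q) = ennreal ((sr/vol) powr (1/q))"
      unfolding SE using volp sr0 by (simp add: ennreal_mult'[symmetric] epowr_ennreal)
    have r1: "(sr/vol) powr (1/q) \<le> (c * mr powr q / vol) powr (1/q)"
      using srle volp sr0 q by (intro powr_mono2 divide_right_mono) auto
    have r2: "(c * mr powr q / vol) powr (1/q) = C1 powr (1/q) * 2 * l powr s * mr / vol powr (1/q)"
      using C1 lp mrp volp q unfolding c_def by (simp add: powr_mult powr_divide powr_powr)
    have r3: "vol powr (\<gamma> / (2 + \<alpha>) + 1 / q - 1 / p) / vol powr (1/q) = vol powr (\<gamma>/(2+\<alpha>) - 1)"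
      using volp p1 by (simp add: powr_diff[symmetric])
    have "vol powr (\<gamma> / (2 + \<alpha>) + 1 / q - 1 / p) * (1/mr) * (sr/vol) powr (1/q)
        \<le> vol powr (\<gamma> / (2 + \<alpha>) + 1 / q - 1 / p) * (1/mr) * (C1 powr (1/q) * 2 * l powr s * mr / vol powr (1/q))"
      using r1 r2 mrp by (intro mult_left_mono) auto
    also have "\<dots> = (vol powr (\<gamma> / (2 + \<alpha>) + 1 / q - 1 / p) / vol powr (1/q)) * (C1 powr (1/q) * 2 * l powr s)"
      using mrp by (simp add: field_simps)
    also have "\<dots> = vol powr (\<gamma>/(2+\<alpha>) - 1) * (C1 powr (1/q) * 2 * (b-a) powr (2+\<alpha>-\<gamma>))"
      unfolding r3 l_def s_def by simp
    finally have real: "vol powr (\<gamma> / (2 + \<alpha>) + 1 / q - 1 / p) * (1/mr) * (sr/vol) powr (1/q)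
        \<le> vol powr (\<gamma>/(2+\<alpha>) - 1) * (C1 powr (1/q) * 2 * (b-a) powr (2+\<alpha>-\<gamma>))" .
    have "ennreal (vol powr (\<gamma> / (2 + \<alpha>) + 1 / q - 1 / p)) * omega_factor \<alpha> p \<omega> a b *
            epowr (ennreal (1 / vol) * S) (1 / q)
        = ennreal (vol powr (\<gamma> / (2 + \<alpha>) + 1 / q - 1 / p) * (1/mr) * (sr/vol) powr (1/q))"
      unfolding of ep using mrp by (simp add: ennreal_mult'[symmetric])
    also have "\<dots> \<le> ennreal (vol powr (\<gamma>/(2+\<alpha>) - 1) * (C1 powr (1/q) * 2 * (b-a) powr (2+\<alpha>-\<gamma>)))"
      by (rule ennreal_leI[OF real])
    finally show ?thesis unfolding vol_def S_def .
  qed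
qed

lemma conj_exp_facts:
  assumes "p > 1"
  shows "conj_exp p > 1" "1 / conj_exp p = 1 - 1/p" "(1 - conj_exp p) * (p - 1) = -1"
  using assms unfolding conj_exp_def by (auto simp: field_simps)

lemma key_pointwise:
  fixes x w p pp :: real
  assumes "p > 1" "(1 - pp) * (p - 1) = -1" "w > 0" "0 \<le> x" "x \<le> w powr (1 - pp)"
  shows "x powr p * w \<le> x"
proof (cases "x = 0")
  case True then show ?thesis by simp
next
  case False
  then have xp: "x > 0" using assms by simp
  have "x powr p = x * x powr (p - 1)" using xp by (simp add: powr_diff)
  also have "x powr (p-1) \<le> (w powr (1 - pp)) powr (p - 1)"
    using assms xp by (intro powr_mono2) auto
  also have "(w powr (1 - pp)) powr (p - 1) = w powr (-1)"
    using assms by (simp add: powr_powr)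
  finally have "x powr p \<le> x * w powr (-1)" using xp by (simp add: mult_left_mono)
  then have "x powr p \<le> x / w" using assms by (simp add: powr_minus divide_inverse)
  then show ?thesis using assms(3) by (simp add: pos_le_divide_eq)
qed

lemma ab_pgt1:
  fixes \<alpha> \<gamma> p q C1 a b :: real and \<omega> \<sigma> :: "complex \<Rightarrow> real"
  assumes al: "\<alpha> > -1" and q: "p \<le> q" and wo: "weight \<omega>" and C1: "C1 > 0" and ab: "a < b"
    and p1: "p > 1"
    and A: "\<forall>f :: complex \<Rightarrow> real.
            f \<in> borel_measurable lebesgue \<longrightarrow>
            (\<integral>\<^sup>+ z. ennreal (\<bar>f z\<bar> powr p * \<omega> z) \<partial>Valpha \<alpha>) < \<infinity> \<longrightarrow>
            (\<forall>lam>0. wmeas \<alpha> \<sigma> {z \<in> upper_half. Mfrac \<alpha> \<gamma> f z > ennreal lam}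
                 \<le> ennreal (C1 / lam powr q) *
                   epowr (\<integral>\<^sup>+ z. ennreal (\<bar>f z\<bar> powr p * \<omega> z) \<partial>Valpha \<alpha>) (q / p))"
  shows "ennreal (measure (Valpha \<alpha>) (cbox_Q a b) powr (\<gamma> / (2 + \<alpha>) + 1 / q - 1 / p)) *
            omega_factor \<alpha> p \<omega> a b *
            epowr (ennreal (1 / measure (Valpha \<alpha>) (cbox_Q a b)) * wmeas \<alpha> \<sigma> (cbox_Q a b)) (1 / q)
         \<le> ennreal (measure (Valpha \<alpha>) (cbox_Q a b) powr (\<gamma>/(2+\<alpha>) - 1) * (C1 powr (1/q) * 2 * (b-a) powr (2+\<alpha>-\<gamma>)))"
proof -
  note wm[measurable] = weight_meas[OF wo]
  define vol where "vol = measure (Valpha \<alpha>) (cbox_Q a b)"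
  define l where "l = b - a"
  define s where "s = 2+\<alpha>-\<gamma>"
  define c where "c = C1 * 2 powr q * l powr (s*q)"
  define S where "S = wmeas \<alpha> \<sigma> (cbox_Q a b)"
  define pp where "pp = conj_exp p"
  have pp1: "pp > 1" "1 / pp = 1 - 1/p" "(1 - pp) * (p - 1) = -1" unfolding pp_def using conj_exp_facts[OF p1] by auto
  have qp: "q > 0" using q p1 by simp
  have lp: "l > 0" using ab unfolding l_def by simp
  have cp: "c > 0" unfolding c_def using C1 lp by simp
  have volp: "vol > 0" unfolding vol_def using measure_box[OF al ab] ab al by simp
  have volE: "emeasure (Valpha \<alpha>) (cbox_Q a b) = ennreal vol"
    unfolding vol_def using vol_box[OF al ab] measure_box[OF al ab] by simp
  have LHS0: "ennreal (measure (Valpha \<alpha>) (cbox_Q a b) powr (\<gamma> / (2 + \<alpha>) + 1 / q - 1 / p)) *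
            omega_factor \<alpha> p \<omega> a b *
            epowr (ennreal (1 / measure (Valpha \<alpha>) (cbox_Q a b)) * wmeas \<alpha> \<sigma> (cbox_Q a b)) (1 / q) = 0"
    if "S = 0" using that unfolding S_def by simp
  define Z where "Z = cbox_Q a b \<inter> {z. \<omega> z = 0}"
  have Zm[measurable]: "Z \<in> sets lebesgue" unfolding Z_def by measurable
  have ZQ: "Z \<subseteq> cbox_Q a b" unfolding Z_def by auto
  have ZH: "Z \<subseteq> upper_half" using ZQ Q_sub_H by auto
  show ?thesis
  proof (cases "AE z in lebesgue. z \<notin> Z")
    case False
    have VZ: "emeasure (Valpha \<alpha>) Z > 0" by (rule V_pos[OF Zm ZH False])
    have "emeasure (Valpha \<alpha>) Z \<le> emeasure (Valpha \<alpha>) (cbox_Q a b)"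
      by (rule emeasure_mono[OF ZQ]) simp
    then have VZf: "emeasure (Valpha \<alpha>) Z < \<infinity>" using volE by (simp add: le_less_trans)
    define e where "e = enn2real (emeasure (Valpha \<alpha>) Z)"
    have eE: "emeasure (Valpha \<alpha>) Z = ennreal e" unfolding e_def using VZf by simp
    have ep: "e > 0" using VZ eE by simp
    define g where "g = (\<lambda>z. indicator Z z :: real)"
    have gm: "g \<in> borel_measurable lebesgue" unfolding g_def by measurable
    have GE: "(\<integral>\<^sup>+ z. ennreal (\<bar>g z\<bar> powr p * \<omega> z) \<partial>Valpha \<alpha>) = ennreal 0"
    proof -
      have "\<And>z. ennreal (\<bar>g z\<bar> powr p * \<omega> z) = 0" by (auto simp: g_def Z_def indicator_def)
      then show ?thesis by simp
    qed
    have "(\<integral>\<^sup>+ w\<in>cbox_Q a b. ennreal \<bar>g w\<bar> \<partial>Valpha \<alpha>) = (\<integral>\<^sup>+ w. indicator Z w \<partial>Valpha \<alpha>)"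
      by (intro nn_integral_cong) (use ZQ in \<open>auto simp: g_def indicator_def\<close>)
    also have "\<dots> = ennreal e" using eE by simp
    finally have JE: "(\<integral>\<^sup>+ w\<in>cbox_Q a b. ennreal \<bar>g w\<bar> \<partial>Valpha \<alpha>) = ennreal e" .
    have "S \<le> ennreal (C1 * 2 powr q * (b-a) powr ((2+\<alpha>-\<gamma>)*q) / e powr q * 0 powr (q/p))"
      unfolding S_def by (rule test_lemma[OF A ab gm GE _ JE ep]) simp
    then have S0: "S = 0" by simp
    show ?thesis using LHS0[OF S0] by (metis zero_le)
  next
    case True
    define P where "P = cbox_Q a b \<inter> {z. \<omega> z > 0}"
    have Pm[measurable]: "P \<in> sets lebesgue" unfolding P_def by measurable
    have PQ: "P \<subseteq> cbox_Q a b" unfolding P_def by auto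
    have QPZ: "z \<in> P \<or> z \<in> Z" if "z \<in> cbox_Q a b" for z
      using that weight_nonneg[OF wo] Q_sub_H unfolding P_def Z_def by force
    define h where "h = (\<lambda>z. \<omega> z powr (1 - pp))"
    have hm[measurable]: "h \<in> borel_measurable lebesgue" unfolding h_def by measurable
    define gn where "gn = (\<lambda>(n::nat) z. min (h z) (real n) * indicator P z)"
    have gnm[measurable]: "gn n \<in> borel_measurable lebesgue" for n unfolding gn_def by measurable
    have gn0: "0 \<le> gn n z" for n z unfolding gn_def h_def by (auto simp: indicator_def)
    have gnpw: "\<bar>gn n z\<bar> powr p * \<omega> z \<le> gn n z" for n z
    proof (cases "z \<in> P")
      case True
      then have wz: "\<omega> z > 0" unfolding P_def by auto
      have "min (h z) (real n) powr p * \<omega> z \<le> min (h z) (real n)"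
        using key_pointwise[OF p1 pp1(3) wz, of "min (h z) (real n)"] unfolding h_def by auto
      then show ?thesis using True unfolding gn_def h_def by auto
    next
      case False then show ?thesis unfolding gn_def by simp
    qed
    have Jle: "(\<integral>\<^sup>+ z. ennreal (gn n z) \<partial>Valpha \<alpha>) \<le> ennreal (real n * vol)" for n
    proof -
      have "(\<integral>\<^sup>+ z. ennreal (gn n z) \<partial>Valpha \<alpha>) \<le> (\<integral>\<^sup>+ z. ennreal (real n) * indicator (cbox_Q a b) z \<partial>Valpha \<alpha>)"
        by (intro nn_integral_mono) (use PQ in \<open>auto simp: gn_def indicator_def intro!: ennreal_leI\<close>)
      also have "\<dots> = ennreal (real n * vol)" using volE by (simp add: nn_integral_cmult_indicator ennreal_mult')
      finally show ?thesis .
    qed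
    have Jpos: "(\<integral>\<^sup>+ z. ennreal (gn n z) \<partial>Valpha \<alpha>) > 0" if n1: "n \<ge> 1" for n
    proof (rule ccontr)
      assume "\<not> ?thesis"
      then have "(\<integral>\<^sup>+ z. ennreal (gn n z) \<partial>Valpha \<alpha>) = 0" by (simp add: zero_less_iff_neq_zero)
      then have "AE z in Valpha \<alpha>. ennreal (gn n z) = 0" by (subst (asm) nn_integral_0_iff_AE) auto
      then have "AE z in Valpha \<alpha>. z \<notin> P"
      proof eventually_elim
        case (elim z)
        show ?case
        proof
          assume zP: "z \<in> P"
          then have "\<omega> z > 0" unfolding P_def by auto
          then have "h z > 0" unfolding h_def by simp
          then have "gn n z > 0" using zP n1 unfolding gn_def by auto
          then show False using elim by simp
        qed
      qed
      then have "emeasure (Valpha \<alpha>) P = 0"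
        by (subst (asm) AE_iff_measurable[of P]) auto
      then have "AE z in lebesgue. z \<notin> P" using V_null[OF Pm] PQ Q_sub_H by blast
      with True have "AE z in lebesgue. z \<notin> cbox_Q a b" by eventually_elim (use QPZ in blast)
      then have "AE z in Valpha \<alpha>. z \<notin> cbox_Q a b" by (rule V_AE)
      then have "emeasure (Valpha \<alpha>) (cbox_Q a b) = 0"
        by (subst (asm) AE_iff_measurable[of "cbox_Q a b"]) auto
      then show False using volE volp by simp
    qed
    define jn where "jn = (\<lambda>n. enn2real (\<integral>\<^sup>+ z. ennreal (gn n z) \<partial>Valpha \<alpha>))"
    have jnE: "(\<integral>\<^sup>+ z. ennreal (gn n z) \<partial>Valpha \<alpha>) = ennreal (jn n)" for n
      unfolding jn_def using Jle[of n] by (simp add: ennreal_enn2real_if top_unique) (metis ennreal_neq_top neq_top_trans)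
    have jnp: "jn n > 0" if "n \<ge> 1" for n using Jpos[OF that] jnE[of n] by simp
    have Sle: "S \<le> ennreal (c * jn n powr (q/p - q))" if n1: "n \<ge> 1" for n
    proof -
      have Gle: "(\<integral>\<^sup>+ z. ennreal (\<bar>gn n z\<bar> powr p * \<omega> z) \<partial>Valpha \<alpha>) \<le> ennreal (jn n)"
        unfolding jnE[symmetric] by (intro nn_integral_mono ennreal_leI gnpw)
      define G where "G = enn2real (\<integral>\<^sup>+ z. ennreal (\<bar>gn n z\<bar> powr p * \<omega> z) \<partial>Valpha \<alpha>)"
      have GE: "(\<integral>\<^sup>+ z. ennreal (\<bar>gn n z\<bar> powr p * \<omega> z) \<partial>Valpha \<alpha>) = ennreal G"
        unfolding G_def using Gle by (simp add: ennreal_enn2real_if top_unique) (metis ennreal_neq_top neq_top_trans)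
      have G0: "0 \<le> G" unfolding G_def by simp
      have Gj: "G \<le> jn n" using Gle GE jnp[OF n1] by (simp add: ennreal_le_iff)
      have JE: "(\<integral>\<^sup>+ w\<in>cbox_Q a b. ennreal \<bar>gn n w\<bar> \<partial>Valpha \<alpha>) = ennreal (jn n)"
        unfolding jnE[symmetric] by (intro nn_integral_cong) (use PQ in \<open>auto simp: gn_def h_def indicator_def\<close>)
      have "S \<le> ennreal (C1 * 2 powr q * (b-a) powr ((2+\<alpha>-\<gamma>)*q) / jn n powr q * G powr (q/p))"
        unfolding S_def by (rule test_lemma[OF A ab gnm GE G0 JE jnp[OF n1]])
      also have "C1 * 2 powr q * (b-a) powr ((2+\<alpha>-\<gamma>)*q) / jn n powr q * G powr (q/p) \<le> c * jn n powr (q/p - q)"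
      proof -
        have "G powr (q/p) \<le> jn n powr (q/p)" using G0 Gj qp p1 by (intro powr_mono2) auto
        then have "c / jn n powr q * G powr (q/p) \<le> c / jn n powr q * jn n powr (q/p)"
          using cp jnp[OF n1] by (intro mult_left_mono) auto
        also have "\<dots> = c * jn n powr (q/p - q)" using jnp[OF n1] by (simp add: powr_diff)
        finally show ?thesis unfolding c_def l_def s_def by simp
      qed
      then have "ennreal (C1 * 2 powr q * (b-a) powr ((2+\<alpha>-\<gamma>)*q) / jn n powr q * G powr (q/p)) \<le> ennreal (c * jn n powr (q/p - q))"
        by (rule ennreal_leI)
      finally show ?thesis .
    qed
    have Sfin: "S < \<infinity>" using Sle[of 1] by (simp add: le_less_trans)
    define sr where "sr = enn2real S"
    have SE: "S = ennreal sr" unfolding sr_def using Sfin by simp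
    have sr0: "0 \<le> sr" unfolding sr_def by simp
    show ?thesis
    proof (cases "sr = 0")
      case True
      then have S0: "S = 0" using SE by simp
      show ?thesis using LHS0[OF S0] by (metis zero_le)
    next
      case False
      then have srp: "sr > 0" using sr0 by simp
      define X where "X = (c/sr) powr (1/q)"
      have Xp: "X > 0" unfolding X_def using cp srp by simp
      define Jm where "Jm = X powr pp"
      have jnJm: "jn n \<le> Jm" if n1: "n \<ge> 1" for n
      proof -
        have jp: "jn n > 0" by (rule jnp[OF n1])
        have "sr \<le> c * jn n powr (q/p - q)" using Sle[OF n1] SE cp jp by (simp add: ennreal_le_iff)
        also have "q/p - q = - (q/pp)"
        proof -
          have "q/pp = q * (1/pp)" by simp
          also have "\<dots> = q * (1 - 1/p)" using pp1(2) by simp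
          also have "\<dots> = q - q/p" by (simp add: algebra_simps)
          finally show ?thesis by linarith
        qed
        finally have "sr \<le> c / jn n powr (q/pp)" by (simp add: powr_minus divide_inverse)
        then have "jn n powr (q/pp) \<le> c / sr" using srp jp by (simp add: field_simps)
        then have "(jn n powr (q/pp)) powr (pp/q) \<le> (c/sr) powr (pp/q)"
          using jp pp1 qp by (intro powr_mono2) auto
        moreover have "(jn n powr (q/pp)) powr (pp/q) = jn n" using jp pp1 qp by (simp add: powr_powr)
        moreover have "(c/sr) powr (pp/q) = Jm" unfolding Jm_def X_def using cp srp by (simp add: powr_powr)
        ultimately show ?thesis by simp
      qed
      have Jm0: "0 \<le> Jm" unfolding Jm_def by simp
      define W where "W = (\<integral>\<^sup>+ z\<in>cbox_Q a b. wpow \<omega> p z \<partial>Valpha \<alpha>)"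
      have "W = (\<integral>\<^sup>+ z. ennreal (h z) * indicator P z \<partial>Valpha \<alpha>)"
      proof -
        have "AE z in Valpha \<alpha>. z \<notin> Z" using V_AE[OF True] .
        then show ?thesis unfolding W_def
        proof (intro nn_integral_cong_AE, eventually_elim)
          case (elim z)
          show ?case
          proof (cases "z \<in> cbox_Q a b")
            case True
            then have "z \<in> P" using QPZ elim by blast
            then have "\<omega> z \<noteq> 0" unfolding P_def by auto
            then show ?thesis using True \<open>z \<in> P\<close> unfolding wpow_def h_def pp_def by simp
          next
            case False then show ?thesis using PQ by (auto simp: indicator_def)
          qed
        qed
      qed
      also have "\<dots> = (\<integral>\<^sup>+ z. (SUP n. ennreal (gn n z)) \<partial>Valpha \<alpha>)"
      proof (intro nn_integral_cong)
        fix z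
        show "ennreal (h z) * indicator P z = (SUP n. ennreal (gn n z))"
        proof (cases "z \<in> P")
          case False then show ?thesis unfolding gn_def h_def by simp
        next
          case zP: True
          obtain N :: nat where N: "h z \<le> real N" using real_arch_simple by blast
          have "(SUP n. ennreal (gn n z)) \<le> ennreal (h z)"
            by (intro SUP_least ennreal_leI) (auto simp: gn_def h_def indicator_def)
          moreover have "ennreal (h z) \<le> (SUP n. ennreal (gn n z))"
            by (rule SUP_upper2[of N]) (use N zP in \<open>auto simp: gn_def\<close>)
          ultimately show ?thesis using zP by simp
        qed
      qed
      also have "\<dots> = (SUP n. (\<integral>\<^sup>+ z. ennreal (gn n z) \<partial>Valpha \<alpha>))"
      proof (rule nn_integral_monotone_convergence_SUP)
        show "incseq (\<lambda>n z. ennreal (gn n z))"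
          by (auto simp: incseq_def le_fun_def gn_def indicator_def intro!: ennreal_leI)
      qed simp
      also have "\<dots> \<le> ennreal Jm"
      proof (intro SUP_least)
        fix n
        show "(\<integral>\<^sup>+ z. ennreal (gn n z) \<partial>Valpha \<alpha>) \<le> ennreal Jm"
        proof (cases "n = 0")
          case True
          then have "\<And>z. ennreal (gn n z) = 0" by (simp add: gn_def h_def min_def)
          then show ?thesis by simp
        next
          case False then show ?thesis using jnE[of n] jnJm[of n] by (simp add: ennreal_leI)
        qed
      qed
      finally have WJ: "W \<le> ennreal Jm" .
      define w where "w = enn2real W"
      have WE: "W = ennreal w" unfolding w_def using WJ by (simp add: ennreal_enn2real_if top_unique) (metis ennreal_neq_top neq_top_trans)
      have w0: "0 \<le> w" unfolding w_def by simp
      have wJ: "w \<le> Jm" using WJ WE Jm0 by (simp add: ennreal_le_iff)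
      have of: "omega_factor \<alpha> p \<omega> a b = ennreal ((w/vol) powr (1/pp))"
        unfolding omega_factor_def using p1 WE[unfolded W_def] w0 volp
        by (simp add: vol_def[symmetric] pp_def[symmetric] ennreal_mult'[symmetric] epowr_ennreal)
      have ep: "epowr (ennreal (1 / vol) * S) (1 / q) = ennreal ((sr/vol) powr (1/q))"
        unfolding SE using volp sr0 by (simp add: ennreal_mult'[symmetric] epowr_ennreal)
      have r1: "(w/vol) powr (1/pp) \<le> X / vol powr (1/pp)"
      proof -
        have "(w/vol) powr (1/pp) \<le> (Jm/vol) powr (1/pp)"
          using wJ w0 volp pp1 p1 by (intro powr_mono2 divide_right_mono) auto
        also have "\<dots> = X / vol powr (1/pp)"
          unfolding Jm_def using Xp volp pp1(1) by (simp add: powr_divide powr_powr)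
        finally show ?thesis .
      qed
      have r2: "X * sr powr (1/q) = C1 powr (1/q) * 2 * l powr s"
        unfolding X_def c_def using srp C1 lp qp by (simp add: powr_divide powr_mult powr_powr)
      define e where "e = \<gamma> / (2 + \<alpha>) + 1 / q - 1 / p"
      have r3: "vol powr e / vol powr (1/pp) / vol powr (1/q) = vol powr (\<gamma>/(2+\<alpha>) - 1)"
        unfolding e_def using volp pp1 by (simp add: powr_diff[symmetric])
      have "vol powr e * (w/vol) powr (1/pp) * (sr/vol) powr (1/q)
          \<le> vol powr e * (X / vol powr (1/pp)) * (sr/vol) powr (1/q)"
        using r1 by (intro mult_right_mono mult_left_mono) auto
      also have "\<dots> = vol powr e * (X / vol powr (1/pp)) * (sr powr (1/q) / vol powr (1/q))"
        using srp volp by (simp add: powr_divide)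
      also have "\<dots> = (vol powr e / vol powr (1/pp) / vol powr (1/q)) * (X * sr powr (1/q))"
        by (simp add: field_simps)
      also have "\<dots> = vol powr (\<gamma>/(2+\<alpha>) - 1) * (C1 powr (1/q) * 2 * (b-a) powr (2+\<alpha>-\<gamma>))"
        unfolding r3 r2 l_def s_def by simp
      finally have real: "vol powr e * (w/vol) powr (1/pp) * (sr/vol) powr (1/q)
          \<le> vol powr (\<gamma>/(2+\<alpha>) - 1) * (C1 powr (1/q) * 2 * (b-a) powr (2+\<alpha>-\<gamma>))" .
      have "ennreal (vol powr e) * omega_factor \<alpha> p \<omega> a b * epowr (ennreal (1 / vol) * S) (1 / q)
          = ennreal (vol powr e * (w/vol) powr (1/pp) * (sr/vol) powr (1/q))"
        unfolding of ep by (simp add: ennreal_mult'[symmetric])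
      also have "\<dots> \<le> ennreal (vol powr (\<gamma>/(2+\<alpha>) - 1) * (C1 powr (1/q) * 2 * (b-a) powr (2+\<alpha>-\<gamma>)))"
        by (rule ennreal_leI[OF real])
      finally show ?thesis unfolding vol_def S_def e_def .
    qed
  qed
qed

lemma holder_box:
  fixes \<alpha> p a b n :: real and f \<omega> :: "complex \<Rightarrow> real"
  assumes al: "\<alpha> > -1" and p: "p \<ge> 1" and wo: "weight \<omega>" and ab: "a < b"
    and Em[measurable]: "E \<in> sets lebesgue" and EQ: "E \<subseteq> cbox_Q a b"
    and fm[measurable]: "f \<in> borel_measurable lebesgue"
    and Phi: "omega_factor \<alpha> p \<omega> a b < \<infinity>"
    and NE: "(\<integral>\<^sup>+ z. ennreal (\<bar>f z\<bar> powr p * \<omega> z) * indicator E z \<partial>Valpha \<alpha>) = ennreal n" "0 \<le> n"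
  shows "(\<integral>\<^sup>+ z. ennreal \<bar>f z\<bar> * indicator E z \<partial>Valpha \<alpha>)
     \<le> ennreal (n powr (1/p) * measure (Valpha \<alpha>) (cbox_Q a b) powr (1 - 1/p) * enn2real (omega_factor \<alpha> p \<omega> a b))"
proof -
  note wm[measurable] = weight_meas[OF wo]
  define vol where "vol = measure (Valpha \<alpha>) (cbox_Q a b)"
  have volp: "vol > 0" unfolding vol_def using measure_box[OF al ab] ab al by simp
  have EH: "z \<in> E \<Longrightarrow> 0 \<le> \<omega> z" for z using EQ Q_sub_H weight_nonneg[OF wo] by blast
  show ?thesis
  proof (cases "p = 1")
    case True
    define m where "m = essinf_box \<omega> a b"
    have mf: "m < \<infinity>" unfolding m_def by (rule essinf_fin[OF wo al ab])
    have "\<not> m \<le> 0" using Phi True unfolding omega_factor_def inv_essinf_box_def m_def by auto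
    then obtain mr where mr: "m = ereal mr" "0 < mr" using mf by (cases m) auto
    have of: "omega_factor \<alpha> p \<omega> a b = ennreal (1/mr)"
      unfolding omega_factor_def inv_essinf_box_def using True mr by (simp add: m_def[symmetric])
    have "AE z in lebesgue. z \<in> cbox_Q a b \<longrightarrow> m \<le> ereal (\<omega> z)" unfolding m_def by (rule essinf_AE[OF wm])
    then have AEm: "AE z in Valpha \<alpha>. z \<in> cbox_Q a b \<longrightarrow> mr \<le> \<omega> z" using mr by (intro V_AE) simp
    have "(\<integral>\<^sup>+ z. ennreal \<bar>f z\<bar> * indicator E z \<partial>Valpha \<alpha>)
        \<le> (\<integral>\<^sup>+ z. ennreal (1/mr) * (ennreal (\<bar>f z\<bar> powr p * \<omega> z) * indicator E z) \<partial>Valpha \<alpha>)"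
    proof (intro nn_integral_mono_AE, use AEm in eventually_elim)
      case (elim z)
      show ?case
      proof (cases "z \<in> E")
        case True
        then have "mr \<le> \<omega> z" using elim EQ by auto
        then have "\<bar>f z\<bar> \<le> 1/mr * (\<bar>f z\<bar> * \<omega> z)" using mr
          by (simp add: field_simps mult_right_mono)
        then show ?thesis using True \<open>p = 1\<close> mr by (simp add: ennreal_mult'[symmetric] ennreal_leI)
      qed simp
    qed
    also have "\<dots> = ennreal (1/mr) * ennreal n"
      using NE by (simp add: nn_integral_cmult)
    also have "\<dots> = ennreal (n powr (1/p) * vol powr (1 - 1/p) * enn2real (omega_factor \<alpha> p \<omega> a b))"
      using True NE(2) mr volp of by (simp add: ennreal_mult'[symmetric] mult.commute)
    finally show ?thesis unfolding vol_def .
  next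
    case False
    then have p1: "p > 1" using p by simp
    define pp where "pp = conj_exp p"
    have pp1: "pp > 1" "1 / pp = 1 - 1/p" "(1 - pp) * (p - 1) = -1" unfolding pp_def using conj_exp_facts[OF p1] by auto
    have ppp: "p / (p - 1) = pp" unfolding pp_def conj_exp_def ..
    define W where "W = (\<integral>\<^sup>+ z\<in>cbox_Q a b. wpow \<omega> p z \<partial>Valpha \<alpha>)"
    have of0: "omega_factor \<alpha> p \<omega> a b = epowr (ennreal (1 / vol) * W) (1 / pp)"
      unfolding omega_factor_def using False by (simp add: vol_def W_def pp_def)
    have Wn: "W \<noteq> \<infinity>"
    proof
      assume "W = \<infinity>"
      then have "ennreal (1 / vol) * W = \<infinity>" using volp by (simp add: ennreal_mult_top)
      then show False using Phi of0 by (simp add: epowr_def)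
    qed
    then have Wf: "W < \<infinity>" by (simp add: less_top)
    define w where "w = enn2real W"
    have WE: "W = ennreal w" unfolding w_def using Wf by simp
    have w0: "0 \<le> w" unfolding w_def by simp
    have of: "enn2real (omega_factor \<alpha> p \<omega> a b) = (w/vol) powr (1/pp)"
      unfolding of0 WE using volp w0 by (simp add: ennreal_mult'[symmetric] epowr_ennreal)
    have wpm[measurable]: "wpow \<omega> p \<in> borel_measurable lebesgue"
      unfolding wpow_def by measurable
    have "AE z in Valpha \<alpha>. wpow \<omega> p z * indicator (cbox_Q a b) z \<noteq> \<infinity>"
      using Wf unfolding W_def by (intro nn_integral_noteq_infinite) auto
    then have AEw: "AE z in Valpha \<alpha>. z \<in> E \<longrightarrow> \<omega> z \<noteq> 0"
      by eventually_elim (use EQ in \<open>auto simp: wpow_def indicator_def split: if_splits\<close>)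
    define g where "g = (\<lambda>z. \<bar>f z\<bar> * \<omega> z powr (1/p) * indicator E z)"
    define h where "h = (\<lambda>z. \<omega> z powr (-1/p) * indicator E z)"
    have gm[measurable]: "g \<in> borel_measurable (Valpha \<alpha>)" unfolding g_def by measurable
    have hm[measurable]: "h \<in> borel_measurable (Valpha \<alpha>)" unfolding h_def by measurable
    have g0: "0 \<le> g z" for z unfolding g_def by (simp add: indicator_def)
    have h0: "0 \<le> h z" for z unfolding h_def by (simp add: indicator_def)
    have gp: "(\<integral>\<^sup>+ z. ennreal (g z powr p) \<partial>Valpha \<alpha>) = ennreal n"
    proof -
      have "(\<integral>\<^sup>+ z. ennreal (g z powr p) \<partial>Valpha \<alpha>) = (\<integral>\<^sup>+ z. ennreal (\<bar>f z\<bar> powr p * \<omega> z) * indicator E z \<partial>Valpha \<alpha>)"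
      proof (intro nn_integral_cong)
        fix z show "ennreal (g z powr p) = ennreal (\<bar>f z\<bar> powr p * \<omega> z) * indicator E z"
        proof (cases "z \<in> E")
          case True
          then have "0 \<le> \<omega> z" by (rule EH)
          then have "g z powr p = \<bar>f z\<bar> powr p * \<omega> z"
            using True p1 unfolding g_def by (simp add: powr_mult powr_powr)
          then show ?thesis using True by simp
        qed (simp add: g_def)
      qed
      then show ?thesis using NE by simp
    qed
    define B where "B = enn2real (\<integral>\<^sup>+ z. ennreal (h z powr (p/(p-1))) \<partial>Valpha \<alpha>)"
    have Ble: "(\<integral>\<^sup>+ z. ennreal (h z powr (p/(p-1))) \<partial>Valpha \<alpha>) \<le> W"
      unfolding W_def
    proof (intro nn_integral_mono)
      fix z show "ennreal (h z powr (p/(p-1))) \<le> wpow \<omega> p z * indicator (cbox_Q a b) z"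
      proof (cases "z \<in> E")
        case True
        then have zQ: "z \<in> cbox_Q a b" using EQ by auto
        show ?thesis
        proof (cases "\<omega> z = 0")
          case True then show ?thesis using zQ by (simp add: wpow_def h_def)
        next
          case False
          then have wp: "\<omega> z > 0" using EH[OF \<open>z \<in> E\<close>] by simp
          have "h z powr (p/(p-1)) = \<omega> z powr (1 - pp)"
            using \<open>z \<in> E\<close> wp p1 unfolding h_def ppp by (simp add: powr_powr pp_def conj_exp_def field_simps)
          then show ?thesis using zQ False by (simp add: wpow_def pp_def)
        qed
      qed (simp add: h_def)
    qed
    then have BE: "(\<integral>\<^sup>+ z. ennreal (h z powr (p/(p-1))) \<partial>Valpha \<alpha>) = ennreal B"
      unfolding B_def using Wf by (simp add: ennreal_enn2real_if top_unique)
    have B0: "0 \<le> B" unfolding B_def by simp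
    have Bw: "B \<le> w" using Ble BE WE w0 by (simp add: ennreal_le_iff)
    have "(\<integral>\<^sup>+ z. ennreal \<bar>f z\<bar> * indicator E z \<partial>Valpha \<alpha>) = (\<integral>\<^sup>+ z. ennreal (g z * h z) \<partial>Valpha \<alpha>)"
    proof (intro nn_integral_cong_AE, use AEw in eventually_elim)
      case (elim z)
      show ?case
      proof (cases "z \<in> E")
        case True
        then have wp: "\<omega> z > 0" using elim EH by force
        have "\<omega> z powr (1/p) * \<omega> z powr (-1/p) = 1" using wp by (simp add: powr_add[symmetric])
        then have "g z * h z = \<bar>f z\<bar>" using True unfolding g_def h_def by (simp add: mult_ac)
        then show ?thesis using True by simp
      qed (simp add: g_def h_def)
    qed
    also have "\<dots> \<le> ennreal (n powr (1/p) * B powr ((p-1)/p))"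
      by (rule holder_nn[OF gm hm g0 h0 p1 gp NE(2) BE B0])
    also have "n powr (1/p) * B powr ((p-1)/p) \<le> n powr (1/p) * vol powr (1 - 1/p) * ((w/vol) powr (1/pp))"
    proof -
      have e: "(p-1)/p = 1/pp" using pp1 p1 by (simp add: field_simps)
      have "B powr ((p-1)/p) \<le> w powr (1/pp)" unfolding e using B0 Bw pp1 p1 by (intro powr_mono2) auto
      also have "w powr (1/pp) = vol powr (1/pp) * (w/vol) powr (1/pp)"
        using volp w0 by (simp add: powr_divide)
      finally show ?thesis using pp1 by (simp add: mult_left_mono mult.assoc)
    qed
    then have "ennreal (n powr (1/p) * B powr ((p-1)/p)) \<le> ennreal (n powr (1/p) * vol powr (1 - 1/p) * ((w/vol) powr (1/pp)))"
      by (rule ennreal_leI)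
    finally show ?thesis unfolding of vol_def .
  qed
qed

lemma epowr_eq_0: "epowr x r = 0 \<Longrightarrow> x = 0"
  by (cases "x = \<infinity>") (auto simp: epowr_def enn2real_eq_0_iff)

lemma key_box:
  fixes \<alpha> \<gamma> p q C2 a b lam nq :: real and f \<omega> \<sigma> :: "complex \<Rightarrow> real"
  assumes al: "\<alpha> > -1" and g0: "0 \<le> \<gamma>" and g1: "\<gamma> < 2 + \<alpha>" and p: "1 \<le> p" and pq: "p \<le> q"
    and wo: "weight \<omega>" and C2: "C2 > 0"
    and B: "\<forall>a b. a < b \<longrightarrow>
            ennreal (measure (Valpha \<alpha>) (cbox_Q a b) powr (\<gamma> / (2 + \<alpha>) + 1 / q - 1 / p)) *
            omega_factor \<alpha> p \<omega> a b *
            epowr (ennreal (1 / measure (Valpha \<alpha>) (cbox_Q a b)) * wmeas \<alpha> \<sigma> (cbox_Q a b)) (1 / q)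
            \<le> ennreal C2"
    and ab: "a < b" and fm[measurable]: "f \<in> borel_measurable lebesgue" and lam: "lam > 0"
    and big: "ennreal (lam * (b-a) powr (2+\<alpha>-\<gamma>)) < (\<integral>\<^sup>+ w\<in>cbox_Q a b. ennreal \<bar>f w\<bar> \<partial>Valpha \<alpha>)"
    and NQ: "(\<integral>\<^sup>+ z. ennreal (\<bar>f z\<bar> powr p * \<omega> z) * indicator (cbox_Q a b) z \<partial>Valpha \<alpha>) = ennreal nq" "0 \<le> nq"
  shows "wmeas \<alpha> \<sigma> (cbox_Q (2 * a - b) (2 * b - a))
     \<le> ennreal ((C2 * (1/(1+\<alpha>)) powr ((2+\<alpha>-\<gamma>)/(2+\<alpha>)) * 3 powr (2+\<alpha>-\<gamma>)) powr q / lam powr q * nq powr (q/p))"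
proof -
  define a' where "a' = 2 * a - b"
  define b' where "b' = 2 * b - a"
  have ab': "a' < b'" unfolding a'_def b'_def using ab by simp
  define l where "l = b - a"
  have lp: "l > 0" unfolding l_def using ab by simp
  define s where "s = 2 + \<alpha> - \<gamma>"
  have sp: "s > 0" unfolding s_def using g1 by simp
  define V3 where "V3 = measure (Valpha \<alpha>) (cbox_Q a' b')"
  have V3eq: "V3 = (3*l) powr (2+\<alpha>) * (1/(1+\<alpha>))"
    unfolding V3_def using measure_box[OF al ab'] unfolding a'_def b'_def l_def by (simp add: algebra_simps)
  have V3p: "V3 > 0" using V3eq lp al by simp
  define e where "e = \<gamma> / (2 + \<alpha>) + 1 / q - 1 / p"
  define \<Phi> where "\<Phi> = omega_factor \<alpha> p \<omega> a' b'"
  define S3 where "S3 = wmeas \<alpha> \<sigma> (cbox_Q a' b')"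
  define M where "M = C2 * (1/(1+\<alpha>)) powr ((2+\<alpha>-\<gamma>)/(2+\<alpha>)) * 3 powr (2+\<alpha>-\<gamma>)"
  have Mp: "M > 0" unfolding M_def using C2 al by simp
  have qp: "q > 0" using p pq by simp
  have Bab: "ennreal (V3 powr e) * \<Phi> * epowr (ennreal (1 / V3) * S3) (1 / q) \<le> ennreal C2"
    using B ab' unfolding V3_def e_def \<Phi>_def S3_def by blast
  have QQ3: "cbox_Q a b \<subseteq> cbox_Q a' b'" unfolding a'_def b'_def cbox_Q_def using ab by auto
  show ?thesis
  proof (cases "\<Phi> = \<infinity>")
    case True
    have "epowr (ennreal (1 / V3) * S3) (1 / q) = 0"
    proof (rule ccontr)
      assume "epowr (ennreal (1 / V3) * S3) (1 / q) \<noteq> 0"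
      then have "ennreal (V3 powr e) * \<Phi> * epowr (ennreal (1 / V3) * S3) (1 / q) = \<infinity>"
        using True V3p by (simp add: ennreal_mult_top ennreal_top_mult)
      then show False using Bab by (simp add: top_unique)
    qed
    then have "ennreal (1 / V3) * S3 = 0" by (rule epowr_eq_0)
    then have "S3 = 0" using V3p by simp
    then show ?thesis unfolding S3_def a'_def b'_def by simp
  next
    case False
    then have Phif: "\<Phi> < \<infinity>" by (simp add: less_top)
    define \<phi> where "\<phi> = enn2real \<Phi>"
    have \<Phi>E: "\<Phi> = ennreal \<phi>" unfolding \<phi>_def using Phif by simp
    have \<phi>0: "0 \<le> \<phi>" unfolding \<phi>_def by simp
    define R where "R = nq powr (1/p) * V3 powr (1 - 1/p) * \<phi>"
    have "(\<integral>\<^sup>+ w\<in>cbox_Q a b. ennreal \<bar>f w\<bar> \<partial>Valpha \<alpha>) \<le> ennreal R"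
      unfolding R_def \<phi>_def V3_def \<Phi>_def
      by (rule holder_box[OF al p wo ab' _ QQ3 fm Phif[unfolded \<Phi>_def] NQ]) simp
    with big have "ennreal (lam * l powr s) < ennreal R" unfolding l_def s_def
      by (rule less_le_trans)
    moreover have lls: "0 < lam * l powr s" using lam lp by simp
    ultimately have hl: "lam * l powr s < R" by (simp add: ennreal_less_iff)
    then have Rp: "R > 0" using lls by linarith
    then have \<phi>p: "\<phi> > 0" using \<phi>0 unfolding R_def by (cases "\<phi> = 0") auto
    have S3n: "S3 \<noteq> \<infinity>"
    proof
      assume "S3 = \<infinity>"
      then have "ennreal (V3 powr e) * \<Phi> * epowr (ennreal (1 / V3) * S3) (1 / q) = \<infinity>"
        using V3p \<phi>p \<Phi>E by (simp add: ennreal_mult_top epowr_def ennreal_mult_eq_top_iff)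
      then show False using Bab by (simp add: top_unique)
    qed
    define s3 where "s3 = enn2real S3"
    have S3E: "S3 = ennreal s3" unfolding s3_def using S3n by (simp add: less_top)
    have s30: "0 \<le> s3" unfolding s3_def by simp
    define t where "t = s3 powr (1/q)"
    have t0: "0 \<le> t" unfolding t_def by simp
    have bb: "V3 powr e * \<phi> * (t / V3 powr (1/q)) \<le> C2"
    proof -
      have "ennreal (V3 powr e) * \<Phi> * epowr (ennreal (1 / V3) * S3) (1 / q)
          = ennreal (V3 powr e * \<phi> * (s3/V3) powr (1/q))"
        unfolding \<Phi>E S3E using V3p s30 \<phi>0
        by (simp add: ennreal_mult'[symmetric] epowr_ennreal)
      with Bab have "V3 powr e * \<phi> * (s3/V3) powr (1/q) \<le> C2"
        using C2 by (simp add: ennreal_le_iff)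
      moreover have "(s3/V3) powr (1/q) = t / V3 powr (1/q)" unfolding t_def using s30 V3p by (simp add: powr_divide)
      ultimately show ?thesis by simp
    qed
    have ex: "(1 - 1/p) + 1/q - e = s / (2+\<alpha>)"
    proof -
      have "(1 - 1/p) + 1/q - e = 1 - \<gamma>/(2+\<alpha>)" unfolding e_def by simp
      also have "\<dots> = s/(2+\<alpha>)" unfolding s_def using al by (simp add: diff_divide_distrib)
      finally show ?thesis .
    qed
    have "t * (lam * l powr s) \<le> t * R" using hl t0 by (simp add: mult_left_mono)
    also have "t * R = nq powr (1/p) * (V3 powr (1 - 1/p) * V3 powr (1/q) / V3 powr e) * (V3 powr e * \<phi> * (t / V3 powr (1/q)))"
      unfolding R_def using V3p by (simp add: field_simps)
    also have "V3 powr (1 - 1/p) * V3 powr (1/q) / V3 powr e = V3 powr (s/(2+\<alpha>))"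
      using V3p ex by (simp add: powr_add[symmetric] powr_diff[symmetric])
    also have "nq powr (1/p) * V3 powr (s/(2+\<alpha>)) * (V3 powr e * \<phi> * (t / V3 powr (1/q)))
        \<le> nq powr (1/p) * V3 powr (s/(2+\<alpha>)) * C2"
      using bb by (intro mult_left_mono) auto
    also have "V3 powr (s/(2+\<alpha>)) = l powr s * (3 powr s * (1/(1+\<alpha>)) powr (s/(2+\<alpha>)))"
    proof -
      have "V3 powr (s/(2+\<alpha>)) = ((3*l) powr (2+\<alpha>)) powr (s/(2+\<alpha>)) * (1/(1+\<alpha>)) powr (s/(2+\<alpha>))"
        unfolding V3eq by (rule powr_mult)
      also have "((3*l) powr (2+\<alpha>)) powr (s/(2+\<alpha>)) = (3*l) powr s"
        using al by (simp add: powr_powr)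
      also have "(3*l) powr s = 3 powr s * l powr s" using lp by (simp add: powr_mult)
      finally show ?thesis by simp
    qed
    finally have "t * (lam * l powr s) \<le> nq powr (1/p) * (l powr s * (3 powr s * (1/(1+\<alpha>)) powr (s/(2+\<alpha>)))) * C2" .
    then have "t * lam \<le> nq powr (1/p) * M"
      unfolding M_def s_def[symmetric] using lp by (simp add: field_simps)
    then have tle: "t \<le> nq powr (1/p) * M / lam" using lam by (simp add: field_simps)
    have "s3 = t powr q" unfolding t_def using s30 qp by (simp add: powr_powr)
    also have "\<dots> \<le> (nq powr (1/p) * M / lam) powr q" using tle t0 qp by (intro powr_mono2) auto
    also have "\<dots> = M powr q / lam powr q * nq powr (q/p)"
      using Mp lam NQ(2) by (simp add: powr_mult powr_divide powr_powr)
    finally have "s3 \<le> M powr q / lam powr q * nq powr (q/p)" .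
    then show ?thesis unfolding S3E[unfolded S3_def a'_def b'_def] M_def by (rule ennreal_leI)
  qed
qed

lemma conv_ineq:
  fixes X :: ennreal and lam l s :: real
  assumes "lam > 0" "l > 0"
  shows "ennreal (lam * l powr s) < X \<longleftrightarrow> ennreal lam < ennreal (l powr (-s)) * X"
proof (cases X)
  case (real x)
  have c: "l powr (-s) > 0" "l powr s > 0" using assms by auto
  have e: "l powr (-s) * l powr s = 1" using assms by (simp add: powr_add[symmetric])
  have "ennreal (lam * l powr s) < X \<longleftrightarrow> lam * l powr s < x" using real assms
    by (simp add: ennreal_less_iff)
  also have "\<dots> \<longleftrightarrow> lam < l powr (-s) * x"
  proof
    assume "lam * l powr s < x"
    then have "l powr (-s) * (lam * l powr s) < l powr (-s) * x" using c by simp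
    then show "lam < l powr (-s) * x" using e by (simp add: mult_ac)
  next
    assume "lam < l powr (-s) * x"
    then have "l powr s * lam < l powr s * (l powr (-s) * x)" using c by simp
    then show "lam * l powr s < x" using e by (simp add: mult_ac)
  qed
  also have "\<dots> \<longleftrightarrow> ennreal lam < ennreal (l powr (-s)) * X" using real assms c
    by (simp add: ennreal_mult[symmetric] ennreal_less_iff)
  finally show ?thesis .
next
  case top
  then show ?thesis using assms by (simp add: ennreal_mult_top)
qed

lemma level_set:
  fixes \<alpha> \<gamma> lam :: real and f :: "complex \<Rightarrow> real"
  assumes g1: "\<gamma> < 2 + \<alpha>" and lam: "lam > 0"
  shows "{z \<in> upper_half. Mfrac \<alpha> \<gamma> f z > ennreal lam} =
    (\<Union>t\<in>{t. fst t \<in> \<rat> \<and> snd t \<in> \<rat> \<and> fst t < snd t \<and>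
        ennreal (lam * (snd t - fst t) powr (2+\<alpha>-\<gamma>)) < (\<integral>\<^sup>+ w\<in>cbox_Q (fst t) (snd t). ennreal \<bar>f w\<bar> \<partial>Valpha \<alpha>)}.
      cbox_Q (fst t) (snd t))" (is "?L = ?R")
proof
  define s where "s = 2+\<alpha>-\<gamma>"
  have sp: "s > 0" unfolding s_def using g1 by simp
  show "?R \<subseteq> ?L"
  proof
    fix z assume "z \<in> ?R"
    then obtain a b where ab: "a < b" "z \<in> cbox_Q a b"
      and big: "ennreal (lam * (b - a) powr s) < (\<integral>\<^sup>+ w\<in>cbox_Q a b. ennreal \<bar>f w\<bar> \<partial>Valpha \<alpha>)"
      unfolding s_def by auto
    have "ennreal lam < ennreal ((b-a) powr (-s)) * (\<integral>\<^sup>+ w\<in>cbox_Q a b. ennreal \<bar>f w\<bar> \<partial>Valpha \<alpha>)"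
      using big conv_ineq[of lam "b-a"] lam ab by simp
    also have "\<dots> \<le> Mfrac \<alpha> \<gamma> f z" using Mfrac_ge[OF ab] unfolding s_def by simp
    finally show "z \<in> ?L" using ab Q_sub_H by auto
  qed
  show "?L \<subseteq> ?R"
  proof
    fix z assume "z \<in> ?L"
    then have zH: "z \<in> upper_half" and M: "ennreal lam < Mfrac \<alpha> \<gamma> f z" by auto
    then obtain I where I: "I \<in> {(a, b). a < b \<and> z \<in> cbox_Q a b}"
      and lt: "ennreal lam < ennreal ((snd I - fst I) powr (- (2 + \<alpha> - \<gamma>))) *
      (\<integral>\<^sup>+ w\<in>cbox_Q (fst I) (snd I). ennreal \<bar>f w\<bar> \<partial>Valpha \<alpha>)"
      unfolding Mfrac_def by (auto simp: less_SUP_iff)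
    obtain a b where Iab: "I = (a,b)" by (cases I)
    have ab: "a < b" "z \<in> cbox_Q a b" using I Iab by auto
    define l where "l = b - a"
    have lp: "l > 0" using ab unfolding l_def by simp
    define X where "X = (\<integral>\<^sup>+ w\<in>cbox_Q a b. ennreal \<bar>f w\<bar> \<partial>Valpha \<alpha>)"
    have bigX: "ennreal (lam * l powr s) < X"
      using lt conv_ineq[of lam l s X] lam lp unfolding Iab X_def l_def s_def by simp
    obtain L where L: "L > l" "ennreal (lam * L powr s) < X"
    proof (cases X)
      case top
      show ?thesis by (rule that[of "l+1"]) (use top in auto)
    next
      case (real x)
      have lx: "lam * l powr s < x" using bigX real lam lp by (simp add: ennreal_less_iff)
      define x' where "x' = (lam * l powr s + x)/2"
      define L where "L = (x'/lam) powr (1/s)"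
      have "0 < lam * l powr s" using lam lp by simp
      then have "x > 0" using lx by linarith
      then have x'p: "x' > 0" unfolding x'_def using \<open>0 < lam * l powr s\<close> by simp
      have "l powr s < x'/lam" using lx lam unfolding x'_def by (simp add: field_simps)
      then have "(l powr s) powr (1/s) < (x'/lam) powr (1/s)"
        using lp sp by (intro powr_less_mono2) auto
      then have "l < L" unfolding L_def using lp sp by (simp add: powr_powr)
      moreover have "lam * L powr s = x'" unfolding L_def using x'p lam sp by (simp add: powr_powr)
      then have "ennreal (lam * L powr s) < X" using real lx x'p unfolding x'_def by (simp add: ennreal_less_iff)
      ultimately show ?thesis by (rule that)
    qed
    define d where "d = (L - l)/2"
    have dp: "d > 0" unfolding d_def using L by simp
    obtain a' where a': "a' \<in> \<rat>" "a - d < a'" "a' < a" using Rats_dense_in_real[of "a-d" a] dp by auto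
    obtain b' where b': "b' \<in> \<rat>" "b < b'" "b' < b + d" using Rats_dense_in_real[of b "b+d"] dp by auto
    have ab': "a' < b'" using a' b' ab by simp
    have sub: "cbox_Q a b \<subseteq> cbox_Q a' b'" using a' b' unfolding cbox_Q_def by auto
    have "X \<le> (\<integral>\<^sup>+ w\<in>cbox_Q a' b'. ennreal \<bar>f w\<bar> \<partial>Valpha \<alpha>)"
      unfolding X_def using sub by (intro nn_integral_mono) (auto simp: indicator_def)
    moreover have "ennreal (lam * (b' - a') powr s) \<le> ennreal (lam * L powr s)"
    proof (intro ennreal_leI mult_left_mono powr_mono2)
      have d2: "2 * d = L - l" unfolding d_def by simp
      show "b' - a' \<le> L" using a' b' d2 unfolding l_def by linarith
    qed (use ab' lam sp in auto)
    ultimately have "ennreal (lam * (b' - a') powr s) < (\<integral>\<^sup>+ w\<in>cbox_Q a' b'. ennreal \<bar>f w\<bar> \<partial>Valpha \<alpha>)"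
      using L(2) by (meson le_less_trans less_le_trans)
    then show "z \<in> ?R" using a' b' ab' sub ab unfolding s_def
      by (intro UN_I[of "(a',b')"]) auto
  qed
qed

lemma dir_ab:
  fixes \<alpha> \<gamma> p q :: real and \<omega> \<sigma> :: "complex \<Rightarrow> real"
  assumes al: "\<alpha> > -1" and g0: "0 \<le> \<gamma>" and g1: "\<gamma> < 2 + \<alpha>"
    and p: "1 \<le> p" and pq: "p \<le> q"
    and wo: "weight \<omega>" and ws: "weight \<sigma>"
    and A': "\<exists>C1>0. \<forall>f :: complex \<Rightarrow> real.
            f \<in> borel_measurable lebesgue \<longrightarrow>
            (\<integral>\<^sup>+ z. ennreal (\<bar>f z\<bar> powr p * \<omega> z) \<partial>Valpha \<alpha>) < \<infinity> \<longrightarrow>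
            (\<forall>lam>0. wmeas \<alpha> \<sigma> {z \<in> upper_half. Mfrac \<alpha> \<gamma> f z > ennreal lam}
                 \<le> ennreal (C1 / lam powr q) *
                   epowr (\<integral>\<^sup>+ z. ennreal (\<bar>f z\<bar> powr p * \<omega> z) \<partial>Valpha \<alpha>) (q / p))"
  shows "\<exists>C2>0. \<forall>a b. a < b \<longrightarrow>
            ennreal (measure (Valpha \<alpha>) (cbox_Q a b) powr (\<gamma> / (2 + \<alpha>) + 1 / q - 1 / p)) *
            omega_factor \<alpha> p \<omega> a b *
            epowr (ennreal (1 / measure (Valpha \<alpha>) (cbox_Q a b)) * wmeas \<alpha> \<sigma> (cbox_Q a b)) (1 / q)
            \<le> ennreal C2"
proof -
  obtain C1 where C1: "C1 > 0" and A: "\<forall>f :: complex \<Rightarrow> real.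
            f \<in> borel_measurable lebesgue \<longrightarrow>
            (\<integral>\<^sup>+ z. ennreal (\<bar>f z\<bar> powr p * \<omega> z) \<partial>Valpha \<alpha>) < \<infinity> \<longrightarrow>
            (\<forall>lam>0. wmeas \<alpha> \<sigma> {z \<in> upper_half. Mfrac \<alpha> \<gamma> f z > ennreal lam}
                 \<le> ennreal (C1 / lam powr q) *
                   epowr (\<integral>\<^sup>+ z. ennreal (\<bar>f z\<bar> powr p * \<omega> z) \<partial>Valpha \<alpha>) (q / p))"
    using A' by blast
  define C2 where "C2 = (1/(1+\<alpha>)) powr (\<gamma>/(2+\<alpha>) - 1) * (C1 powr (1/q) * 2)"
  have C2p: "C2 > 0" unfolding C2_def using al C1 by simp
  show ?thesis
  proof (intro exI[of _ C2] conjI allI impI C2p)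
    fix a b :: real assume ab: "a < b"
    have bd: "ennreal (measure (Valpha \<alpha>) (cbox_Q a b) powr (\<gamma> / (2 + \<alpha>) + 1 / q - 1 / p)) *
            omega_factor \<alpha> p \<omega> a b *
            epowr (ennreal (1 / measure (Valpha \<alpha>) (cbox_Q a b)) * wmeas \<alpha> \<sigma> (cbox_Q a b)) (1 / q)
         \<le> ennreal (measure (Valpha \<alpha>) (cbox_Q a b) powr (\<gamma>/(2+\<alpha>) - 1) * (C1 powr (1/q) * 2 * (b-a) powr (2+\<alpha>-\<gamma>)))"
    proof (cases "p = 1")
      case True
      show ?thesis by (rule ab_p1[OF al _ wo C1 ab True A]) (use p pq in simp)
    next
      case False
      then have "p > 1" using p by simp
      then show ?thesis by (rule ab_pgt1[OF al pq wo C1 ab _ A])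
    qed
    also have "measure (Valpha \<alpha>) (cbox_Q a b) powr (\<gamma>/(2+\<alpha>) - 1) * (C1 powr (1/q) * 2 * (b-a) powr (2+\<alpha>-\<gamma>)) = C2"
    proof -
      define l where "l = b - a"
      have lp: "l > 0" using ab unfolding l_def by simp
      have vol: "measure (Valpha \<alpha>) (cbox_Q a b) = l powr (2+\<alpha>) * (1/(1+\<alpha>))"
        using measure_box[OF al ab] unfolding l_def by simp
      have "measure (Valpha \<alpha>) (cbox_Q a b) powr (\<gamma>/(2+\<alpha>) - 1) = (l powr (2+\<alpha>)) powr (\<gamma>/(2+\<alpha>) - 1) * (1/(1+\<alpha>)) powr (\<gamma>/(2+\<alpha>) - 1)"
        unfolding vol by (rule powr_mult)
      also have "(l powr (2+\<alpha>)) powr (\<gamma>/(2+\<alpha>) - 1) = l powr (-(2+\<alpha>-\<gamma>))"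
      proof -
        have "(2+\<alpha>) * (\<gamma>/(2+\<alpha>) - 1) = -(2+\<alpha>-\<gamma>)" using al by (simp add: field_simps)
        then show ?thesis by (simp add: powr_powr)
      qed
      finally have "measure (Valpha \<alpha>) (cbox_Q a b) powr (\<gamma>/(2+\<alpha>) - 1) = l powr (-(2+\<alpha>-\<gamma>)) * (1/(1+\<alpha>)) powr (\<gamma>/(2+\<alpha>) - 1)" .
      moreover have "l powr (-(2+\<alpha>-\<gamma>)) * l powr (2+\<alpha>-\<gamma>) = 1" using lp by (simp add: powr_add[symmetric])
      ultimately show ?thesis unfolding C2_def l_def[symmetric]
        by (simp add: mult_ac)
    qed
    finally show "ennreal (measure (Valpha \<alpha>) (cbox_Q a b) powr (\<gamma> / (2 + \<alpha>) + 1 / q - 1 / p)) *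
            omega_factor \<alpha> p \<omega> a b *
            epowr (ennreal (1 / measure (Valpha \<alpha>) (cbox_Q a b)) * wmeas \<alpha> \<sigma> (cbox_Q a b)) (1 / q)
            \<le> ennreal C2" .
  qed
qed

lemma dir_ba:
  fixes \<alpha> \<gamma> p q :: real and \<omega> \<sigma> :: "complex \<Rightarrow> real"
  assumes al: "\<alpha> > -1" and g0: "0 \<le> \<gamma>" and g1: "\<gamma> < 2 + \<alpha>"
    and p: "1 \<le> p" and pq: "p \<le> q"
    and wo: "weight \<omega>" and ws: "weight \<sigma>"
    and B': "\<exists>C2>0. \<forall>a b. a < b \<longrightarrow>
            ennreal (measure (Valpha \<alpha>) (cbox_Q a b) powr (\<gamma> / (2 + \<alpha>) + 1 / q - 1 / p)) *
            omega_factor \<alpha> p \<omega> a b *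
            epowr (ennreal (1 / measure (Valpha \<alpha>) (cbox_Q a b)) * wmeas \<alpha> \<sigma> (cbox_Q a b)) (1 / q)
            \<le> ennreal C2"
  shows "\<exists>C1>0. \<forall>f :: complex \<Rightarrow> real.
            f \<in> borel_measurable lebesgue \<longrightarrow>
            (\<integral>\<^sup>+ z. ennreal (\<bar>f z\<bar> powr p * \<omega> z) \<partial>Valpha \<alpha>) < \<infinity> \<longrightarrow>
            (\<forall>lam>0. wmeas \<alpha> \<sigma> {z \<in> upper_half. Mfrac \<alpha> \<gamma> f z > ennreal lam}
                 \<le> ennreal (C1 / lam powr q) *
                   epowr (\<integral>\<^sup>+ z. ennreal (\<bar>f z\<bar> powr p * \<omega> z) \<partial>Valpha \<alpha>) (q / p))"
proof -
  obtain C2 where C2: "C2 > 0" and B: "\<forall>a b. a < b \<longrightarrow>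
            ennreal (measure (Valpha \<alpha>) (cbox_Q a b) powr (\<gamma> / (2 + \<alpha>) + 1 / q - 1 / p)) *
            omega_factor \<alpha> p \<omega> a b *
            epowr (ennreal (1 / measure (Valpha \<alpha>) (cbox_Q a b)) * wmeas \<alpha> \<sigma> (cbox_Q a b)) (1 / q)
            \<le> ennreal C2" using B' by blast
  define K where "K = (C2 * (1/(1+\<alpha>)) powr ((2+\<alpha>-\<gamma>)/(2+\<alpha>)) * 3 powr (2+\<alpha>-\<gamma>)) powr q"
  have Kp: "K > 0" unfolding K_def using C2 al by simp
  have qp: "q > 0" using p pq by simp
  note [measurable] = weight_meas[OF wo] weight_meas[OF ws]
  show ?thesis
  proof (intro exI[of _ K] conjI allI impI Kp)
    fix f :: "complex \<Rightarrow> real" and lam :: real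
    assume fm[measurable]: "f \<in> borel_measurable lebesgue"
      and Nf: "(\<integral>\<^sup>+ z. ennreal (\<bar>f z\<bar> powr p * \<omega> z) \<partial>Valpha \<alpha>) < \<infinity>" and lam: "lam > 0"
    define N where "N = (\<integral>\<^sup>+ z. ennreal (\<bar>f z\<bar> powr p * \<omega> z) \<partial>Valpha \<alpha>)"
    define n where "n = enn2real N"
    have NE: "N = ennreal n" unfolding n_def using Nf N_def by simp
    have n0: "0 \<le> n" unfolding n_def by simp
    define Q where "Q = (\<lambda>t::real\<times>real. cbox_Q (fst t) (snd t))"
    define Q3 where "Q3 = (\<lambda>t::real\<times>real. cbox_Q (2 * fst t - snd t) (2 * snd t - fst t))"
    define S where "S = {t. fst t \<in> \<rat> \<and> snd t \<in> \<rat> \<and> fst t < snd t \<and>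
        ennreal (lam * (snd t - fst t) powr (2+\<alpha>-\<gamma>)) < (\<integral>\<^sup>+ w\<in>cbox_Q (fst t) (snd t). ennreal \<bar>f w\<bar> \<partial>Valpha \<alpha>)}"
    have LS: "{z \<in> upper_half. Mfrac \<alpha> \<gamma> f z > ennreal lam} = (\<Union>t\<in>S. Q t)"
      unfolding S_def Q_def by (rule level_set[OF g1 lam])
    have cS: "countable S"
    proof (rule countable_subset)
      show "S \<subseteq> \<rat> \<times> \<rat>" unfolding S_def by auto
      show "countable (\<rat> \<times> \<rat> :: (real \<times> real) set)" by (intro countable_SIGMA countable_rat)
    qed
    define Md where "Md = density (Valpha \<alpha>) (\<lambda>z. ennreal (\<sigma> z))"
    have wE: "wmeas \<alpha> \<sigma> E = emeasure Md E" if "E \<in> sets lebesgue" for E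
      unfolding wmeas_def Md_def using that by (subst emeasure_density) auto
    define Nd where "Nd = density (Valpha \<alpha>) (\<lambda>z. ennreal (\<bar>f z\<bar> powr p * \<omega> z))"
    have NdE: "emeasure Nd E = (\<integral>\<^sup>+ z. ennreal (\<bar>f z\<bar> powr p * \<omega> z) * indicator E z \<partial>Valpha \<alpha>)"
      if "E \<in> sets lebesgue" for E
      unfolding Nd_def using that by (subst emeasure_density) auto
    have Ul: "UNIV \<in> sets lebesgue" using sets.top[of lebesgue] by simp
    have UV: "UNIV \<in> sets (Valpha \<alpha>)" using Ul by (simp only: sets_V)
    have Ntot: "emeasure Nd UNIV = N" using NdE[OF Ul] UV unfolding N_def by simp
    have Qm: "Q t \<in> sets lebesgue" for t unfolding Q_def by simp
    have Q3m: "Q3 t \<in> sets lebesgue" for t unfolding Q3_def by simp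
    define nt where "nt = (\<lambda>t. enn2real (emeasure Nd (Q t)))"
    have ntE: "emeasure Nd (Q t) = ennreal (nt t)" for t
    proof -
      have "emeasure Nd (Q t) \<le> emeasure Nd UNIV" by (rule emeasure_mono) (use UV in \<open>auto simp: Nd_def\<close>)
      then have "emeasure Nd (Q t) < \<infinity>" using Ntot NE by (simp add: le_less_trans)
      then show ?thesis unfolding nt_def by simp
    qed
    have nt0: "0 \<le> nt t" for t unfolding nt_def by simp
    define bound where "bound = K / lam powr q * n powr (q/p)"
    have fin: "emeasure Md (\<Union>t\<in>T. Q t) \<le> ennreal bound" if T: "finite T" "T \<subseteq> S" for T
    proof -
      have Tpos: "\<forall>t\<in>T. fst t < snd t" using T unfolding S_def by auto
      obtain T' where T': "T' \<subseteq> T"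
        "\<forall>s\<in>T'. \<forall>t\<in>T'. s \<noteq> t \<longrightarrow> Q s \<inter> Q t = {}"
        "(\<Union>t\<in>T. Q t) \<subseteq> (\<Union>t\<in>T'. Q3 t)"
        using vitali_boxes[OF T(1) Tpos] unfolding Q_def Q3_def by blast
      have fT': "finite T'" using T' T by (auto intro: finite_subset)
      have kb: "wmeas \<alpha> \<sigma> (Q3 t) \<le> ennreal (K / lam powr q * nt t powr (q/p))" if tT: "t \<in> T'" for t
      proof -
        have tS: "t \<in> S" using tT T' T by auto
        then have ab: "fst t < snd t" and big: "ennreal (lam * (snd t - fst t) powr (2+\<alpha>-\<gamma>)) < (\<integral>\<^sup>+ w\<in>cbox_Q (fst t) (snd t). ennreal \<bar>f w\<bar> \<partial>Valpha \<alpha>)"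
          unfolding S_def by auto
        have NQ: "(\<integral>\<^sup>+ z. ennreal (\<bar>f z\<bar> powr p * \<omega> z) * indicator (cbox_Q (fst t) (snd t)) z \<partial>Valpha \<alpha>) = ennreal (nt t)"
          using NdE[OF Qm[of t]] ntE[of t] unfolding Q_def by simp
        show ?thesis unfolding Q3_def K_def
          by (rule key_box[OF al g0 g1 p pq wo C2 B ab fm lam big NQ nt0])
      qed
      have U3: "(\<Union>t\<in>T'. Q3 t) \<in> sets (Valpha \<alpha>)"
        unfolding sets_V using fT' Q3m by (intro sets.finite_UN) auto
      have "emeasure Md (\<Union>t\<in>T. Q t) \<le> emeasure Md (\<Union>t\<in>T'. Q3 t)"
        using T'(3) U3 by (intro emeasure_mono) (auto simp: Md_def)
      also have "\<dots> \<le> (\<Sum>t\<in>T'. emeasure Md (Q3 t))"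
        using fT' Q3m by (intro emeasure_subadditive_finite) (auto simp: Md_def)
      also have "\<dots> \<le> (\<Sum>t\<in>T'. ennreal (K / lam powr q * nt t powr (q/p)))"
        using kb wE[OF Q3m] by (intro sum_mono) auto
      also have "\<dots> = ennreal (K / lam powr q * (\<Sum>t\<in>T'. nt t powr (q/p)))"
        using Kp lam by (simp add: sum_distrib_left)
      also have "\<dots> \<le> ennreal (K / lam powr q * (\<Sum>t\<in>T'. nt t) powr (q/p))"
        using Kp lam p pq nt0 fT' by (intro ennreal_leI mult_left_mono sum_powr_superadd) auto
      also have "\<dots> \<le> ennreal bound"
      proof -
        have "ennreal (\<Sum>t\<in>T'. nt t) = (\<Sum>t\<in>T'. emeasure Nd (Q t))"
          using ntE nt0 by simp
        also have "\<dots> = emeasure Nd (\<Union>t\<in>T'. Q t)"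
        proof (rule sum_emeasure)
          show "Q ` T' \<subseteq> sets Nd" using Qm by (auto simp: Nd_def)
          show "disjoint_family_on Q T'" using T'(2) unfolding disjoint_family_on_def by blast
        qed (rule fT')
        also have "\<dots> \<le> emeasure Nd UNIV" by (rule emeasure_mono) (use UV in \<open>auto simp: Nd_def\<close>)
        finally have "ennreal (\<Sum>t\<in>T'. nt t) \<le> ennreal n" using Ntot NE by simp
        then have "(\<Sum>t\<in>T'. nt t) \<le> n" using n0 by (simp add: ennreal_le_iff)
        then have "(\<Sum>t\<in>T'. nt t) powr (q/p) \<le> n powr (q/p)"
          using nt0 p qp by (intro powr_mono2) (auto intro: sum_nonneg)
        then show ?thesis unfolding bound_def using Kp lam by (intro ennreal_leI mult_left_mono) auto
      qed
      finally show ?thesis .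
    qed
    have main: "emeasure Md (\<Union>t\<in>S. Q t) \<le> ennreal bound"
    proof (cases "S = {}")
      case True then show ?thesis by simp
    next
      case False
      define e where "e = from_nat_into S"
      have rS: "range e = S" unfolding e_def using False cS by simp
      define A where "A = (\<lambda>m. \<Union>t\<in>e ` {..<m}. Q t)"
      have "(\<Union>t\<in>S. Q t) = (\<Union>m. A m)"
        unfolding A_def rS[symmetric] by auto
      moreover have "(SUP m. emeasure Md (A m)) = emeasure Md (\<Union>m. A m)"
      proof (rule SUP_emeasure_incseq)
        show "range A \<subseteq> sets Md" unfolding A_def Md_def by (auto simp: sets_V Qm intro!: sets.finite_UN)
        show "incseq A" unfolding A_def incseq_def by auto (meson lessThan_iff less_le_trans)
      qed
      moreover have "emeasure Md (A m) \<le> ennreal bound" for m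
        unfolding A_def by (rule fin) (use rS in auto)
      ultimately show ?thesis by (metis SUP_least)
    qed
    have "wmeas \<alpha> \<sigma> {z \<in> upper_half. Mfrac \<alpha> \<gamma> f z > ennreal lam} = emeasure Md (\<Union>t\<in>S. Q t)"
      unfolding LS using cS Qm by (intro wE sets.countable_UN'') auto
    also have "\<dots> \<le> ennreal bound" by (rule main)
    also have "\<dots> = ennreal (K / lam powr q) * epowr N (q / p)"
      unfolding bound_def NE using n0 Kp lam by (simp add: epowr_ennreal ennreal_mult'[symmetric])
    finally show "wmeas \<alpha> \<sigma> {z \<in> upper_half. Mfrac \<alpha> \<gamma> f z > ennreal lam}
                 \<le> ennreal (K / lam powr q) *
                   epowr (\<integral>\<^sup>+ z. ennreal (\<bar>f z\<bar> powr p * \<omega> z) \<partial>Valpha \<alpha>) (q / p)"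
      unfolding N_def .
  qed
qed

theorem corollary4p5:
  fixes \<alpha> \<gamma> p q :: real and \<omega> \<sigma> :: "complex \<Rightarrow> real"
  assumes "\<alpha> > -1" and "0 \<le> \<gamma>" and "\<gamma> < 2 + \<alpha>"
    and "1 \<le> p" and "p \<le> q"
    and "weight \<omega>" and "weight \<sigma>"
  shows "(\<exists>C1>0. \<forall>f :: complex \<Rightarrow> real.
            f \<in> borel_measurable lebesgue \<longrightarrow>
            (\<integral>\<^sup>+ z. ennreal (\<bar>f z\<bar> powr p * \<omega> z) \<partial>Valpha \<alpha>) < \<infinity> \<longrightarrow>
            (\<forall>lam>0. wmeas \<alpha> \<sigma> {z \<in> upper_half. Mfrac \<alpha> \<gamma> f z > ennreal lam}
                 \<le> ennreal (C1 / lam powr q) *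
                   epowr (\<integral>\<^sup>+ z. ennreal (\<bar>f z\<bar> powr p * \<omega> z) \<partial>Valpha \<alpha>) (q / p)))
     \<longleftrightarrow>
         (\<exists>C2>0. \<forall>a b. a < b \<longrightarrow>
            ennreal (measure (Valpha \<alpha>) (cbox_Q a b) powr (\<gamma> / (2 + \<alpha>) + 1 / q - 1 / p)) *
            omega_factor \<alpha> p \<omega> a b *
            epowr (ennreal (1 / measure (Valpha \<alpha>) (cbox_Q a b)) * wmeas \<alpha> \<sigma> (cbox_Q a b)) (1 / q)
            \<le> ennreal C2)"
  using dir_ab[OF assms] dir_ba[OF assms] by (rule iffI)

end
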